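(* Let $U$ be a nonempty open subset of $\mathbb{R}^d$ and $(x_n)_{n\ge1}$ a sequence in $\mathbb{R}^d$. Assume that for $\mathcal{L}^d$-almost every $x\in U$ there exist $\alpha(x)>0$ and an integer $\underline{j}(x)\ge0$ such that $\#\mathrm{M}((x_n)_{n\ge1};\lambda_{j_0}(x),j)\ge\alpha(x)2^{dj}$ for all integers $j_0,j\ge\underline{j}(x)$. Then $(x_n)_{n\ge1}$ is uniformly eutaxic in $U$.
   Context: Fix a norm $|\cdot|$ on $\mathbb{R}^d$; $\mathcal{L}^d$ is Lebesgue measure. $\mathrm{P}_d$ is the set of real sequences $(r_n)_{n\ge1}$ with $r_{n+1}\le r_n$ for all $n$, $r_n\to0$ and $\sum_n r_n^d=\infty$. A sequence $(x_n)$ in $\mathbb{R}^d$ is uniformly eutaxic in $U$ if for every $(r_n)\in\mathrm{P}_d$, $\mathcal{L}^d$-almost every $x\in U$ satisfies $|x-x_n|<r_n$ for infinitely many $n$. A dyadic cube is a set $\lambda=2^{-j}(k+[0,1)^d)$ with $j\in\mathbb{Z}$, $k\in\mathbb{Z}^d$; its generation is $\langle\lambda\rangle=j$; $\lambda_j(x)$ is the unique dyadic cube of generation $j$ containing $x$. For a nonempty dyadic cube $\lambda$ and an integer $j\ge0$, $\mathrm{M}((x_n)_{n\ge1};\lambda,j)$ is the set of dyadic cubes $\lambda'\subseteq\lambda$ of generation $\langle\lambda\rangle+j$ such that $x_n\in\lambda'$ for some $n\le2^{d\langle\lambda'\rangle}$. *)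

theory Defs
  imports "HOL-Analysis.Analysis"
begin

text \<open>R^d is modelled as real^'n, with d = CARD('n).\<close>

definition is_norm :: "('a::real_vector \<Rightarrow> real) \<Rightarrow> bool" where
  "is_norm N \<longleftrightarrow> (\<forall>x. 0 \<le> N x) \<and> (\<forall>x. N x = 0 \<longleftrightarrow> x = 0)
     \<and> (\<forall>c x. N (scaleR c x) = \<bar>c\<bar> * N x) \<and> (\<forall>x y. N (x + y) \<le> N x + N y)"

text \<open>P_d: sequences indexed from 1 (the value at 0 is irrelevant).\<close>
definition P_seq :: "nat \<Rightarrow> (nat \<Rightarrow> real) \<Rightarrow> bool" where
  "P_seq d r \<longleftrightarrow> (\<forall>n\<ge>1. r (Suc n) \<le> r n) \<and> r \<longlonglongrightarrow> 0
     \<and> \<not> summable (\<lambda>n. r (Suc n) ^ d)"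

definition uniformly_eutaxic ::
  "(real^'n \<Rightarrow> real) \<Rightarrow> (nat \<Rightarrow> real^'n) \<Rightarrow> (real^'n) set \<Rightarrow> bool" where
  "uniformly_eutaxic N xs U \<longleftrightarrow>
     (\<forall>r. P_seq CARD('n) r \<longrightarrow>
        (AE x in lebesgue. x \<in> U \<longrightarrow> (\<exists>\<^sub>F n in sequentially. N (x - xs n) < r n)))"

definition dyadic_cube :: "int \<Rightarrow> int^'n \<Rightarrow> (real^'n) set" where
  "dyadic_cube j k = {x. \<forall>i. 2 powr (- real_of_int j) * of_int (k$i) \<le> x$i
                          \<and> x$i < 2 powr (- real_of_int j) * (of_int (k$i) + 1)}"

definition is_dyadic :: "(real^'n) set \<Rightarrow> bool" where
  "is_dyadic l \<longleftrightarrow> (\<exists>j k. l = dyadic_cube j k)"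

definition generation :: "(real^'n) set \<Rightarrow> int" where
  "generation l = (THE j. \<exists>k. l = dyadic_cube j k)"

definition cube_at :: "int \<Rightarrow> real^'n \<Rightarrow> (real^'n) set" where
  "cube_at j x = dyadic_cube j (\<chi> i. \<lfloor>2 powr (real_of_int j) * x$i\<rfloor>)"

definition Mset :: "(nat \<Rightarrow> real^'n) \<Rightarrow> (real^'n) set \<Rightarrow> nat \<Rightarrow> (real^'n) set set" where
  "Mset xs l j = {l'. is_dyadic l' \<and> l' \<subseteq> l \<and> generation l' = generation l + int j
      \<and> (\<exists>n\<ge>1. real n \<le> 2 powr (real CARD('n) * real_of_int (generation l')) \<and> xs n \<in> l')}"

end

theory Submission
  imports Defs
begin


lemma mem_dyadic_cube:
  "x \<in> dyadic_cube j k \<longleftrightarrow> (\<forall>i. \<lfloor>2 powr real_of_int j * x$i\<rfloor> = k$i)"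
proof -
  have h: "2 powr real_of_int j > 0" by simp
  have e: "2 powr (- real_of_int j) = inverse (2 powr real_of_int j)"
    by (simp add: powr_minus)
  have "(2 powr (- real_of_int j) * of_int (k$i) \<le> x$i \<and> x$i < 2 powr (- real_of_int j) * (of_int (k$i) + 1))
     \<longleftrightarrow> \<lfloor>2 powr real_of_int j * x$i\<rfloor> = k$i" for i
    unfolding e floor_eq_iff using h
    by (auto simp: field_simps)
  then show ?thesis unfolding dyadic_cube_def by auto
qed

lemma cube_at_mem: "x \<in> cube_at j x"
  unfolding cube_at_def mem_dyadic_cube by simp

lemma cube_at_eq: "x \<in> dyadic_cube j k \<Longrightarrow> cube_at j x = dyadic_cube j k"
  unfolding cube_at_def mem_dyadic_cube
  by (metis (mono_tags, lifting) vec_eq_iff vec_lambda_beta)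

lemma cube_at_same: "y \<in> cube_at j x \<Longrightarrow> cube_at j y = cube_at j x"
  unfolding cube_at_def[of j x] by (rule cube_at_eq)

lemma dyadic_cube_nonempty: "\<exists>x. x \<in> dyadic_cube j k"
proof -
  define x :: "real^'a" where "x = (\<chi> i. 2 powr (- real_of_int j) * of_int (k$i))"
  have "x \<in> dyadic_cube j k"
    unfolding mem_dyadic_cube x_def
    by (simp add: powr_minus field_simps)
  then show ?thesis by blast
qed

lemma cube_nested:
  assumes "j \<le> j'"
  shows "cube_at j' x \<subseteq> cube_at j x"
proof
  fix y assume y: "y \<in> cube_at j' x"
  have fl: "\<lfloor>2 powr real_of_int j' * y$i\<rfloor> = \<lfloor>2 powr real_of_int j' * x$i\<rfloor>" for i
    using y unfolding cube_at_def mem_dyadic_cube by simp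
  define m where "m = nat (j' - j)"
  have m: "2 powr real_of_int j' = 2 powr real_of_int j * real_of_int (2 ^ m)"
  proof -
    have "real_of_int j' = real_of_int j + real m" using assms by (simp add: m_def)
    then show ?thesis by (simp add: powr_add powr_realpow)
  qed
  have key: "\<lfloor>2 powr real_of_int j * z\<rfloor> = \<lfloor>2 powr real_of_int j' * z\<rfloor> div 2 ^ m" for z :: real
  proof -
    have "2 powr real_of_int j * z = (2 powr real_of_int j' * z) / real_of_int (2 ^ m)"
      unfolding m by simp
    then show ?thesis using floor_divide_real_eq_div[of "2 ^ m" "2 powr real_of_int j' * z"] by simp
  qed
  show "y \<in> cube_at j x"
    unfolding cube_at_def mem_dyadic_cube using key fl by simp
qed

lemma dyadic_cube_neq_gen:
  assumes "j < j'"
  shows "dyadic_cube j k \<noteq> (dyadic_cube j' k' :: (real^'n) set)"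
proof
  assume eq: "dyadic_cube j k = (dyadic_cube j' k' :: (real^'n) set)"
  define a where "a = 2 powr real_of_int j"
  define b where "b = 2 powr real_of_int j'"
  have a: "a > 0" and b: "b > 0" by (auto simp: a_def b_def)
  have ab: "a / b < 1"
  proof -
    have "a / b = 2 powr (real_of_int j - real_of_int j')"
      by (simp add: a_def b_def powr_diff)
    also have "... < 2 powr 0" using assms by (intro powr_less_mono) auto
    finally show ?thesis by simp
  qed
  have ab0: "a / b \<ge> 0" using a b by simp
  define p :: "real^'n" where "p = (\<chi> i. of_int (k$i) / a)"
  define q :: "real^'n" where "q = (\<chi> i. of_int (k$i) / a + 1 / b)"
  have "p \<in> dyadic_cube j k"
    unfolding mem_dyadic_cube p_def a_def[symmetric] using a by simp
  moreover have "q \<in> dyadic_cube j k"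
  proof -
    have "\<lfloor>a * (of_int (k$i) / a + 1 / b)\<rfloor> = k$i" for i
    proof -
      have "a * (of_int (k$i) / a + 1 / b) = of_int (k$i) + a / b" using a by (simp add: field_simps)
      then show ?thesis using ab ab0 by (simp add: floor_eq_iff)
    qed
    then show ?thesis unfolding mem_dyadic_cube q_def a_def[symmetric] by simp
  qed
  ultimately have pq: "p \<in> dyadic_cube j' k'" "q \<in> dyadic_cube j' k'" using eq by auto
  obtain i :: 'n where True by simp
  have "\<lfloor>b * (p$i)\<rfloor> = k'$i" "\<lfloor>b * (q$i)\<rfloor> = k'$i"
    using pq unfolding mem_dyadic_cube b_def[symmetric] by auto
  moreover have "b * (q$i) = b * (p$i) + 1" using b by (simp add: p_def q_def field_simps)
  ultimately show False by simp
qed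

lemma dyadic_cube_eq_gen:
  assumes "dyadic_cube j k = (dyadic_cube j' k' :: (real^'n) set)"
  shows "j = j'"
  using dyadic_cube_neq_gen[of j j' k k'] dyadic_cube_neq_gen[of j' j k' k] assms
  by (metis linorder_neqE)

lemma generation_dyadic: "generation (dyadic_cube j k :: (real^'n) set) = j"
  unfolding generation_def
  by (rule the_equality) (auto dest: dyadic_cube_eq_gen)

lemma generation_cube_at: "generation (cube_at j x) = j"
  unfolding cube_at_def by (rule generation_dyadic)

lemma is_dyadic_cube_at: "is_dyadic (cube_at j x)"
  unfolding is_dyadic_def cube_at_def by blast


lemma dyadic_cube_borel: "dyadic_cube j k \<in> sets (borel :: (real^'n) measure)"
  unfolding dyadic_cube_def by measurable

lemma dyadic_cube_measure:
  "measure lebesgue (dyadic_cube j k :: (real^'n) set) = (1 / 2 powr real_of_int j) ^ CARD('n)"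
proof -
  define h where "h = 2 powr real_of_int j"
  have h: "h > 0" by (simp add: h_def)
  define a :: "real^'n" where "a = (\<chi> i. of_int (k$i) / h)"
  define b :: "real^'n" where "b = (\<chi> i. (of_int (k$i) + 1) / h)"
  have Q: "dyadic_cube j k = {x::real^'n. \<forall>i. a$i \<le> x$i \<and> x$i < b$i}"
    unfolding dyadic_cube_def a_def b_def h_def by (simp add: powr_minus divide_inverse mult.commute)
  have sub1: "box a b \<subseteq> dyadic_cube j k" unfolding Q by (auto simp: mem_box_cart less_imp_le)
  have sub2: "dyadic_cube j k \<subseteq> cbox a b" unfolding Q by (auto simp: mem_box_cart less_imp_le)
  have ne: "cbox a b \<noteq> {}" using sub2 dyadic_cube_nonempty[of j k] by auto
  have bor: "dyadic_cube j k \<in> sets lborel" using dyadic_cube_borel by simp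
  have cf: "cbox a b \<in> fmeasurable lborel" by (rule fmeasurable_cbox)
  have fm: "dyadic_cube j k \<in> fmeasurable lborel"
    by (rule fmeasurableI2[OF cf sub2 bor])
  have bb: "box a b \<in> sets lborel" by simp
  have m1: "measure lborel (box a b) \<le> measure lborel (dyadic_cube j k)"
    by (rule measure_mono_fmeasurable[OF sub1 bb fm])
  have m2: "measure lborel (dyadic_cube j k) \<le> measure lborel (cbox a b)"
    by (rule measure_mono_fmeasurable[OF sub2 bor cf])
  have "measure lborel (box a b) = measure lborel (cbox a b)"
    unfolding measure_lborel_box_eq measure_lborel_cbox_eq ..
  with m1 m2 have "measure lborel (dyadic_cube j k) = measure lborel (cbox a b)" by simp
  also have "\<dots> = (\<Prod>i\<in>UNIV. b$i - a$i)" using ne by (rule content_cbox_cart)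
  also have "\<dots> = (\<Prod>i\<in>(UNIV::'n set). 1 / h)"
  proof (rule prod.cong)
    fix i show "b$i - a$i = 1 / h" unfolding a_def b_def by (simp add: diff_divide_distrib[symmetric])
  qed simp
  finally have "measure lborel (dyadic_cube j k) = (1/h) ^ CARD('n)" by simp
  then show ?thesis using bor by (simp add: h_def)
qed


lemma dyadic_cube_lmeasurable: "(dyadic_cube j k :: (real^'n) set) \<in> lmeasurable"
proof -
  define a :: "real^'n" where "a = (\<chi> i. 2 powr (- real_of_int j) * of_int (k$i))"
  define b :: "real^'n" where "b = (\<chi> i. 2 powr (- real_of_int j) * (of_int (k$i)+1))"
  have sub: "dyadic_cube j k \<subseteq> cbox a b"
    unfolding dyadic_cube_def a_def b_def by (simp add: subset_iff mem_box_cart less_imp_le)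
  have bor: "dyadic_cube j k \<in> sets lebesgue" using dyadic_cube_borel[of j k] by simp
  show ?thesis by (rule fmeasurableI2[OF lmeasurable_cbox sub bor])
qed



lemma cube_at_measure:
  "measure lebesgue (cube_at (int J) (x::real^'n)) = (1/2) ^ (CARD('n) * J)"
proof -
  have "measure lebesgue (cube_at (int J) x) = (1 / 2 powr real J) ^ CARD('n)"
    unfolding cube_at_def using dyadic_cube_measure[of "int J"] by simp
  also have "\<dots> = (1/2) ^ (CARD('n) * J)"
    by (simp add: powr_realpow power_mult power_one_over mult.commute)
  finally show ?thesis .
qed

lemma cube_at_lmeasurable: "cube_at j (x::real^'n) \<in> lmeasurable"
  unfolding cube_at_def by (rule dyadic_cube_lmeasurable)

lemma cube_at_disjoint: "cube_at j x \<noteq> cube_at j y \<Longrightarrow> cube_at j x \<inter> cube_at j y = {}"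
  using cube_at_same by blast

lemma cube_at_inter_nested:
  assumes "z \<in> cube_at j a" "z \<in> cube_at j' b" "j \<le> j'"
  shows "cube_at j' b \<subseteq> cube_at j a"
  using cube_at_same[OF assms(1)] cube_at_same[OF assms(2)] cube_nested[OF assms(3), of z] by simp

lemma disjoint_count:
  fixes F :: "(real^'n) set set"
  assumes Q: "\<And>Q. Q \<in> F \<Longrightarrow> Q \<in> lmeasurable \<and> measure lebesgue Q = \<delta> \<and> Q \<subseteq> S"
    and dis: "pairwise disjnt F" and S: "S \<in> lmeasurable" and d: "\<delta> > 0"
  shows "finite F \<and> real (card F) * \<delta> \<le> measure lebesgue S"
proof -
  have fin: "real (card G) * \<delta> \<le> measure lebesgue S" if "G \<subseteq> F" "finite G" for G
  proof -
    have "(\<Sum>Q\<in>G. measure lebesgue Q) = (\<Sum>Q\<in>G. \<delta>)"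
      by (rule sum.cong) (use Q that in auto)
    then have "real (card G) * \<delta> = (\<Sum>Q\<in>G. measure lebesgue Q)" by simp
    also have "\<dots> = measure lebesgue (\<Union>G)"
      using that Q dis pairwise_subset by (intro measure_Union'[symmetric]) blast+
    also have "\<dots> \<le> measure lebesgue S"
      using that Q S by (intro measure_mono_fmeasurable sets.finite_Union) (auto intro: fmeasurableD)
    finally show ?thesis .
  qed
  have "finite F"
  proof (rule ccontr)
    assume "infinite F"
    then obtain G where G: "finite G" "G \<subseteq> F" "card G = nat \<lceil>measure lebesgue S / \<delta>\<rceil> + 1"
      using infinite_arbitrarily_large by blast
    have "measure lebesgue S / \<delta> < real (card G)" using G(3) by linarith
    then have "measure lebesgue S < real (card G) * \<delta>" using d by (simp add: field_simps)
    with fin[OF G(2,1)] show False by simp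
  qed
  with fin show ?thesis by blast
qed

lemma points_count:
  fixes P :: "(real^'n) set"
  assumes inj: "inj_on (cube_at (int J)) P" and sub: "\<And>p. p \<in> P \<Longrightarrow> cube_at (int J) p \<subseteq> S"
    and S: "S \<in> lmeasurable"
  shows "finite P \<and> real (card P) * (1/2) ^ (CARD('n) * J) \<le> measure lebesgue S"
proof -
  have "finite (cube_at (int J) ` P) \<and> real (card (cube_at (int J) ` P)) * (1/2) ^ (CARD('n) * J) \<le> measure lebesgue S"
  proof (rule disjoint_count[OF _ _ S])
    show "pairwise disjnt (cube_at (int J) ` P)"
      unfolding pairwise_def disjnt_def using cube_at_disjoint by blast
  qed (use sub cube_at_measure cube_at_lmeasurable in auto)
  then show ?thesis using inj by (simp add: card_image finite_image_iff)
qed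


lemma cube_at_sets: "cube_at j (x::real^'n) \<in> sets lebesgue"
  by (rule fmeasurableD[OF cube_at_lmeasurable])

lemma scale_lmeasurable: "finite P \<Longrightarrow> (\<Union>p\<in>P. cube_at j (p::real^'n)) \<in> lmeasurable"
  by (intro fmeasurable.finite_UN cube_at_lmeasurable) 

lemma scale_measure:
  fixes P :: "(real^'n) set"
  assumes "finite P" "inj_on (cube_at (int J)) P" "J \<le> m"
  shows "measure lebesgue (\<Union>p\<in>P. cube_at (int m) p) = real (card P) * (1/2) ^ (CARD('n) * m)"
proof -
  have "measure lebesgue (\<Union>p\<in>P. cube_at (int m) p) = (\<Sum>p\<in>P. measure lebesgue (cube_at (int m) p))"
  proof (rule measure_UNION')
    show "pairwise (\<lambda>p q. disjnt (cube_at (int m) p) (cube_at (int m) q)) P"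
    proof (intro pairwiseI)
      fix p q assume "p \<in> P" "q \<in> P" "p \<noteq> q"
      then have "cube_at (int J) p \<noteq> cube_at (int J) q" using assms(2) by (auto dest: inj_onD)
      then have "cube_at (int J) p \<inter> cube_at (int J) q = {}" by (rule cube_at_disjoint)
      moreover have "cube_at (int m) p \<subseteq> cube_at (int J) p" "cube_at (int m) q \<subseteq> cube_at (int J) q"
        using assms(3) by (auto intro!: cube_nested)
      ultimately show "disjnt (cube_at (int m) p) (cube_at (int m) q)" unfolding disjnt_def by blast
    qed
  qed (use assms cube_at_lmeasurable in auto)
  then show ?thesis by (simp add: cube_at_measure)
qed

lemma half_pow_mult: "a \<le> b \<Longrightarrow> (1/2::real) ^ a * 2 ^ b = 2 ^ (b - a)"
  by (metis le_add_diff_inverse power_add power_one_over nonzero_mult_div_cancel_left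
      power_not_zero times_divide_eq_left zero_neq_numeral mult.commute mult_1)

lemma pair_bound:
  fixes P P' :: "(real^'n) set"
  assumes P: "finite P" and P': "finite P'" and inj': "inj_on (cube_at (int J')) P'" and Jm': "J' \<le> m'"
  shows "measure lebesgue ((\<Union>p\<in>P. cube_at (int m) p) \<inter> (\<Union>p\<in>P'. cube_at (int m') p))
        \<le> real (card P) * 2 ^ (CARD('n) * (J' - m)) * (1/2) ^ (CARD('n) * m')"
proof -
  define A' where "A' = (\<Union>p\<in>P'. cube_at (int m') p)"
  have each: "measure lebesgue (cube_at (int m) p \<inter> A') \<le> 2 ^ (CARD('n) * (J' - m)) * (1/2) ^ (CARD('n) * m')" for p
  proof -
    define S where "S = {p'\<in>P'. cube_at (int m) p \<inter> cube_at (int J') p' \<noteq> {}}"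
    have finS: "finite S" using P' by (simp add: S_def)
    have "cube_at (int m) p \<inter> A' \<subseteq> (\<Union>p'\<in>S. cube_at (int m') p')"
    proof
      fix z assume z: "z \<in> cube_at (int m) p \<inter> A'"
      then obtain p' where p': "p' \<in> P'" "z \<in> cube_at (int m') p'" unfolding A'_def by auto
      then have "z \<in> cube_at (int J') p'" using cube_nested[of "int J'" "int m'"] Jm' by auto
      then have "p' \<in> S" using z p' unfolding S_def by auto
      then show "z \<in> (\<Union>p'\<in>S. cube_at (int m') p')" using p' by auto
    qed
    moreover have "cube_at (int m) p \<inter> A' \<in> sets lebesgue"
      unfolding A'_def by (intro sets.Int fmeasurableD cube_at_lmeasurable scale_lmeasurable P')
    ultimately have "measure lebesgue (cube_at (int m) p \<inter> A') \<le> measure lebesgue (\<Union>p'\<in>S. cube_at (int m') p')"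
      by (intro measure_mono_fmeasurable scale_lmeasurable finS)
    also have "\<dots> \<le> (\<Sum>p'\<in>S. measure lebesgue (cube_at (int m') p'))"
      by (intro measure_UNION_le finS) (auto intro: fmeasurableD cube_at_lmeasurable)
    also have "\<dots> = real (card S) * (1/2) ^ (CARD('n) * m')" by (simp add: cube_at_measure)
    also have "\<dots> \<le> 2 ^ (CARD('n) * (J' - m)) * (1/2) ^ (CARD('n) * m')"
    proof (rule mult_right_mono)
      show "real (card S) \<le> 2 ^ (CARD('n) * (J' - m))"
      proof (cases "m \<le> J'")
        case True
        have injS: "inj_on (cube_at (int J')) S" using inj' by (rule inj_on_subset) (auto simp: S_def)
        have "finite S \<and> real (card S) * (1/2) ^ (CARD('n) * J') \<le> measure lebesgue (cube_at (int m) p)"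
        proof (rule points_count[OF injS _ cube_at_lmeasurable])
          fix p' assume "p' \<in> S"
          then obtain z where "z \<in> cube_at (int m) p" "z \<in> cube_at (int J') p'" unfolding S_def by auto
          then show "cube_at (int J') p' \<subseteq> cube_at (int m) p"
            by (rule cube_at_inter_nested) (use True in simp)
        qed
        then have "real (card S) * (1/2) ^ (CARD('n) * J') \<le> (1/2) ^ (CARD('n) * m)"
          by (simp add: cube_at_measure)
        then have "real (card S) * (1/2) ^ (CARD('n) * J') * 2 ^ (CARD('n) * J') \<le> (1/2) ^ (CARD('n) * m) * 2 ^ (CARD('n) * J')"
          by (rule mult_right_mono) simp
        moreover have "(1/2::real) ^ (CARD('n) * J') * 2 ^ (CARD('n) * J') = 1"
          by (simp add: power_one_over)
        moreover have "(1/2::real) ^ (CARD('n) * m) * 2 ^ (CARD('n) * J') = 2 ^ (CARD('n) * (J' - m))"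
          using True by (subst half_pow_mult) (auto simp: diff_mult_distrib2)
        ultimately show ?thesis by (simp add: mult.assoc)
      next
        case False
        have "card S \<le> Suc 0"
        proof (rule card_le_Suc0_iff_eq[OF finS, THEN iffD2], intro ballI)
          fix a b assume a: "a \<in> S" and b: "b \<in> S"
          have key: "cube_at (int J') q = cube_at (int J') p" if qS: "q \<in> S" for q
          proof -
            obtain z where z: "z \<in> cube_at (int m) p" "z \<in> cube_at (int J') q" using qS unfolding S_def by blast
            have "cube_at (int m) p \<subseteq> cube_at (int J') q"
              by (rule cube_at_inter_nested[OF z(2) z(1)]) (use False in simp)
            then have "p \<in> cube_at (int J') q" using cube_at_mem by blast
            then show ?thesis by (rule cube_at_same[symmetric])
          qed
          have "a \<in> P'" "b \<in> P'" using a b unfolding S_def by auto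
          then show "a = b" using key[OF a] key[OF b] inj' by (metis inj_onD)
        qed
        then show ?thesis using False by simp
      qed
    qed simp
    finally show ?thesis .
  qed
  have "(\<Union>p\<in>P. cube_at (int m) p) \<inter> A' = (\<Union>p\<in>P. cube_at (int m) p \<inter> A')" by auto
  then have "measure lebesgue ((\<Union>p\<in>P. cube_at (int m) p) \<inter> A') = measure lebesgue (\<Union>p\<in>P. cube_at (int m) p \<inter> A')"
    by simp
  also have "\<dots> \<le> (\<Sum>p\<in>P. measure lebesgue (cube_at (int m) p \<inter> A'))"
    by (intro measure_UNION_le P) (auto intro!: sets.Int fmeasurableD cube_at_lmeasurable scale_lmeasurable P' simp: A'_def)
  also have "\<dots> \<le> (\<Sum>p\<in>P. 2 ^ (CARD('n) * (J' - m)) * (1/2) ^ (CARD('n) * m'))"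
    by (rule sum_mono) (rule each)
  finally show ?thesis unfolding A'_def by (simp add: mult.assoc)
qed


lemma bonferroni:
  fixes k :: nat
  assumes "\<And>i. i < k \<Longrightarrow> A i \<in> lmeasurable"
  shows "measure lebesgue (\<Union>i<k. A i) \<ge> (\<Sum>i<k. measure lebesgue (A i)) - (\<Sum>i<k. \<Sum>i'<i. measure lebesgue (A i' \<inter> A i))"
  using assms
proof (induction k)
  case 0
  then show ?case by simp
next
  case (Suc k)
  define U where "U = (\<Union>i<k. A i)"
  have U: "U \<in> lmeasurable" unfolding U_def using Suc.prems by (intro fmeasurable.finite_UN) auto
  have Ak: "A k \<in> lmeasurable" using Suc.prems by simp
  have eq: "(\<Union>i<Suc k. A i) = U \<union> A k" unfolding U_def lessThan_Suc by auto
  have "measure lebesgue (U \<union> A k) = measure lebesgue U + measure lebesgue (A k) - measure lebesgue (U \<inter> A k)"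
    by (rule measure_Un3[OF U Ak])
  moreover have "measure lebesgue (U \<inter> A k) \<le> (\<Sum>i'<k. measure lebesgue (A i' \<inter> A k))"
  proof -
    have "U \<inter> A k = (\<Union>i'<k. A i' \<inter> A k)" unfolding U_def by auto
    also have "measure lebesgue \<dots> \<le> (\<Sum>i'<k. measure lebesgue (A i' \<inter> A k))"
      using Suc.prems by (intro measure_UNION_le) (auto intro!: sets.Int fmeasurableD)
    finally show ?thesis by simp
  qed
  moreover have "measure lebesgue U \<ge> (\<Sum>i<k. measure lebesgue (A i)) - (\<Sum>i<k. \<Sum>i'<i. measure lebesgue (A i' \<inter> A i))"
    unfolding U_def using Suc by simp
  ultimately show ?case unfolding eq by simp
qed

lemma geom_tail:
  fixes x :: real
  assumes "0 \<le> x" "x \<le> 1/2"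
  shows "(\<Sum>i'<i. x ^ (i - i')) \<le> 2 * x"
proof (induction i)
  case 0 then show ?case using assms by simp
next
  case (Suc i)
  have "(\<Sum>i'<Suc i. x ^ (Suc i - i')) = x + (\<Sum>i'<i. x ^ (Suc i - i'))"
    by (simp add: lessThan_Suc add.commute)
  also have "(\<Sum>i'<i. x ^ (Suc i - i')) = x * (\<Sum>i'<i. x ^ (i - i'))"
    by (simp add: sum_distrib_left Suc_diff_le)
  also have "x + x * (\<Sum>i'<i. x ^ (i - i')) \<le> x + x * (2 * x)"
    using Suc assms by (intro add_left_mono mult_left_mono) auto
  also have "\<dots> \<le> 2 * x"
  proof -
    have "x * (2 * x) \<le> x * 1" using assms by (intro mult_left_mono) auto
    then show ?thesis by linarith
  qed
  finally show ?case .
qed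

lemma half_pow_add: "a + b = c \<Longrightarrow> (1/2::real) ^ a * (1/2) ^ b = (1/2) ^ c"
  by (metis power_add)

lemma pair_norm:
  fixes c V0 :: real and d :: nat
  assumes "J \<le> m" "J' \<le> m'" "J \<le> J'" "c * (1/2)^(d*J) \<le> V0" "c \<ge> 0"
  shows "c * 2^(d*(J'-m)) * (1/2)^(d*m') \<le>
     V0 * ((1/2)^(d*(m-J)) * (1/2)^(d*(m'-J')) + (1/2)^(d*(J'-J)) * (1/2)^(d*(m'-J')))"
proof -
  have pos: "(0::real) \<le> (1/2)^(d*(m-J)) * (1/2)^(d*(m'-J'))" "(0::real) \<le> (1/2)^(d*(J'-J)) * (1/2)^(d*(m'-J'))" by auto
  obtain X where X: "c * 2^(d*(J'-m)) * (1/2)^(d*m') = c * (1/2)^(d*J) * X" "0 \<le> X"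
    "X \<le> (1/2)^(d*(m-J)) * (1/2)^(d*(m'-J')) + (1/2)^(d*(J'-J)) * (1/2)^(d*(m'-J'))"
  proof (cases "m \<le> J'")
    case True
    have n1: "J' - m + (m' - J' + m) = m'" using True assms by arith
    have n2: "J + (m - J) + (m' - J') = m' - J' + m" using True assms by arith
    have e1: "(1/2::real)^(d*m') = (1/2)^(d*(J'-m)) * (1/2)^(d*(m'-J'+m))"
      by (rule half_pow_add[symmetric]) (metis n1 add_mult_distrib2)
    have e2: "(1/2::real)^(d*J) * ((1/2)^(d*(m-J)) * (1/2)^(d*(m'-J'))) = (1/2)^(d*(m'-J'+m))"
      by (simp only: mult.assoc[symmetric] power_add[symmetric]) (metis n2 add_mult_distrib2 add.assoc)
    have e3: "(2::real)^(d*(J'-m)) * (1/2)^(d*(J'-m)) = 1" by (simp add: power_one_over)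
    show ?thesis
    proof (rule that[of "(1/2)^(d*(m-J)) * (1/2)^(d*(m'-J'))"])
      show "c * 2 ^ (d * (J' - m)) * (1 / 2) ^ (d * m') = c * (1 / 2) ^ (d * J) * ((1 / 2) ^ (d * (m - J)) * (1 / 2) ^ (d * (m' - J')))"
        unfolding e1 mult.assoc e2[unfolded mult.assoc] using e3 by (simp add: mult.assoc[symmetric])
    qed (use pos in auto)
  next
    case False
    have n2: "J + (J' - J) + (m' - J') = m'" using False assms by arith
    have e2: "(1/2::real)^(d*J) * ((1/2)^(d*(J'-J)) * (1/2)^(d*(m'-J'))) = (1/2)^(d*m')"
      by (simp only: mult.assoc[symmetric] power_add[symmetric]) (metis n2 add_mult_distrib2 add.assoc)
    show ?thesis
    proof (rule that[of "(1/2)^(d*(J'-J)) * (1/2)^(d*(m'-J'))"])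
      show "c * 2 ^ (d * (J' - m)) * (1 / 2) ^ (d * m') = c * (1 / 2) ^ (d * J) * ((1 / 2) ^ (d * (J' - J)) * (1 / 2) ^ (d * (m' - J')))"
        using False e2 by (simp add: mult.assoc)
    qed (use pos in auto)
  qed
  have "c * (1/2)^(d*J) * X \<le> V0 * ((1/2)^(d*(m-J)) * (1/2)^(d*(m'-J')) + (1/2)^(d*(J'-J)) * (1/2)^(d*(m'-J')))"
    using X assms by (intro mult_mono) (auto intro: order.trans[OF _ assms(4)])
  with X(1) show ?thesis by (simp only:)
qed


lemma block_estimate:
  fixes t a :: "nat \<Rightarrow> real" and pr :: "nat \<Rightarrow> nat \<Rightarrow> real" and V0 \<alpha> x :: real and k :: nat
  assumes t0: "\<And>i. i < k \<Longrightarrow> 0 \<le> t i"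
    and a: "\<And>i. i < k \<Longrightarrow> a i \<ge> (\<alpha>/2) * V0 * t i"
    and pr: "\<And>i i'. i < k \<Longrightarrow> i' < i \<Longrightarrow> pr i' i \<le> V0 * (t i' * t i + x ^ (i - i') * t i)"
    and x: "0 \<le> x" "x \<le> 1/2" "2 * x \<le> \<alpha>/8"
    and T: "\<alpha>/8 \<le> (\<Sum>i<k. t i)" "(\<Sum>i<k. t i) \<le> \<alpha>/4"
    and V0: "V0 \<ge> 0" and al: "\<alpha> > 0"
  shows "(\<Sum>i<k. a i) - (\<Sum>i<k. \<Sum>i'<i. pr i' i) \<ge> V0 * (\<alpha>^2/64)"
proof -
  define T where "T = (\<Sum>i<k. t i)"
  have s1: "(\<Sum>i<k. a i) \<ge> (\<alpha>/2) * V0 * T"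
    unfolding T_def sum_distrib_left by (rule sum_mono) (use a in auto)
  have inner: "(\<Sum>i'<i. pr i' i) \<le> V0 * (t i * T + t i * (2 * x))" if i: "i < k" for i
  proof -
    have "(\<Sum>i'<i. pr i' i) \<le> (\<Sum>i'<i. V0 * (t i' * t i + x ^ (i - i') * t i))"
      by (rule sum_mono) (use pr i in auto)
    also have "\<dots> = V0 * (t i * (\<Sum>i'<i. t i') + t i * (\<Sum>i'<i. x ^ (i - i')))"
      by (simp add: sum_distrib_left sum.distrib algebra_simps)
    also have "\<dots> \<le> V0 * (t i * T + t i * (2 * x))"
    proof -
      have "(\<Sum>i'<i. t i') \<le> T" unfolding T_def using i t0 by (intro sum_mono2) auto
      moreover have "(\<Sum>i'<i. x ^ (i - i')) \<le> 2 * x" using x by (intro geom_tail) auto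
      ultimately show ?thesis using t0[OF i] V0
        by (intro mult_left_mono add_mono) auto
    qed
    finally show ?thesis .
  qed
  have s2: "(\<Sum>i<k. \<Sum>i'<i. pr i' i) \<le> V0 * (T * T + T * (2 * x))"
  proof -
    have "(\<Sum>i<k. \<Sum>i'<i. pr i' i) \<le> (\<Sum>i<k. V0 * (t i * T + t i * (2 * x)))"
      by (rule sum_mono) (use inner in auto)
    also have "\<dots> = V0 * (T * T + T * (2 * x))"
      unfolding T_def by (simp add: sum_distrib_left sum_distrib_right sum.distrib algebra_simps)
    finally show ?thesis .
  qed
  have "(\<alpha>/2) * V0 * T - V0 * (T * T + T * (2 * x)) = V0 * (T * (\<alpha>/2 - T - 2 * x))"
    by (simp add: algebra_simps)
  also have "\<dots> \<ge> V0 * ((\<alpha>/8) * (\<alpha>/8))"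
  proof (rule mult_left_mono[OF _ V0])
    have "\<alpha>/8 \<le> \<alpha>/2 - T - 2 * x" using T x unfolding T_def by linarith
    moreover have "\<alpha>/8 \<le> T" using T unfolding T_def by simp
    ultimately show "(\<alpha>/8) * (\<alpha>/8) \<le> T * (\<alpha>/2 - T - 2 * x)"
      using al by (intro mult_mono) auto
  qed
  finally have f: "V0 * ((\<alpha>/8) * (\<alpha>/8)) \<le> (\<alpha>/2) * V0 * T - V0 * (T * T + T * (2 * x))" .
  have "(\<alpha>/2) * V0 * T - V0 * (T * T + T * (2 * x)) \<le> (\<Sum>i<k. a i) - (\<Sum>i<k. \<Sum>i'<i. pr i' i)"
    using s1 s2 by linarith
  moreover have "V0 * ((\<alpha>/8) * (\<alpha>/8)) = V0 * (\<alpha>^2/64)" by (simp add: power2_eq_square)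
  ultimately show ?thesis using f by linarith
qed




lemma is_normD:
  assumes "is_norm N"
  shows "N x \<ge> 0" "N x = 0 \<longleftrightarrow> x = 0" "N (c *\<^sub>R x) = \<bar>c\<bar> * N x" "N (x + y) \<le> N x + N y"
  using assms unfolding is_norm_def by auto

lemma norm_sum_le:
  assumes "is_norm N" "finite S"
  shows "N (sum f S) \<le> (\<Sum>i\<in>S. N (f i))"
  using assms(2)
proof (induction S rule: finite_induct)
  case empty
  have "N 0 = 0" using is_normD(2)[OF assms(1)] by simp
  then show ?case by simp
next
  case (insert a S)
  then show ?case using is_normD(4)[OF assms(1), of "f a" "sum f S"] by simp
qed

lemma norm_coord_bound:
  fixes N :: "real^'n \<Rightarrow> real"
  assumes "is_norm N"
  shows "N v \<le> (\<Sum>i\<in>UNIV. \<bar>v$i\<bar> * N (axis i 1))"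
proof -
  have "v = (\<Sum>i\<in>UNIV. (v$i) *\<^sub>R axis i 1)"
    using basis_expansion[of v] by (simp add: scalar_mult_eq_scaleR)
  then have "N v = N (\<Sum>i\<in>UNIV. (v$i) *\<^sub>R axis i 1)" by simp
  also have "\<dots> \<le> (\<Sum>i\<in>UNIV. N ((v$i) *\<^sub>R axis i 1))" by (rule norm_sum_le[OF assms]) simp
  also have "\<dots> = (\<Sum>i\<in>UNIV. \<bar>v$i\<bar> * N (axis i 1))" using is_normD(3)[OF assms] by simp
  finally show ?thesis .
qed

definition Cn :: "(real^'n \<Rightarrow> real) \<Rightarrow> real" where
  "Cn N = (\<Sum>i\<in>UNIV. N (axis i 1))"

lemma Cn_pos:
  fixes N :: "real^'n \<Rightarrow> real"
  assumes "is_norm N" shows "Cn N > 0"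
proof -
  have "N (axis i 1) > 0" for i :: 'n
    using is_normD(1,2)[OF assms, of "axis i 1"] by (auto simp: axis_eq_0_iff)
  then show ?thesis unfolding Cn_def by (intro sum_pos) auto
qed

lemma norm_lipschitz:
  fixes N :: "real^'n \<Rightarrow> real"
  assumes "is_norm N"
  shows "continuous_on UNIV N"
proof -
  have le: "N (x - y) \<le> Cn N * dist x y" for x y :: "real^'n"
  proof -
    have "N (x - y) \<le> (\<Sum>i\<in>UNIV. \<bar>(x - y)$i\<bar> * N (axis i 1))" by (rule norm_coord_bound[OF assms])
    also have "\<dots> \<le> (\<Sum>i\<in>UNIV. dist x y * N (axis i 1))"
      using is_normD(1)[OF assms] component_le_norm_cart[of "x - y"]
      by (intro sum_mono mult_right_mono) (auto simp: dist_norm)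
    finally show ?thesis by (simp add: Cn_def sum_distrib_left mult.commute)
  qed
  have "(Cn N)-lipschitz_on UNIV N"
  proof (rule lipschitz_onI)
    fix x y :: "real^'n"
    have "N x \<le> N (x - y) + N y" using is_normD(4)[OF assms, of "x - y" y] by simp
    moreover have "N y \<le> N (y - x) + N x" using is_normD(4)[OF assms, of "y - x" x] by simp
    moreover have "N (y - x) = N (x - y)"
      using is_normD(3)[OF assms, of "-1" "x - y"] by simp
    ultimately have "\<bar>N x - N y\<bar> \<le> N (x - y)" by linarith
    then show "dist (N x) (N y) \<le> Cn N * dist x y" using le[of x y] by (simp add: dist_real_def)
  qed (use Cn_pos[OF assms] in simp)
  then show ?thesis by (rule lipschitz_on_continuous_on)
qed

lemma cube_at_coord:
  assumes "y \<in> cube_at (int m) x"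
  shows "\<bar>y$i - x$i\<bar> < 1 / 2^m"
proof -
  have "\<lfloor>2^m * y$i\<rfloor> = \<lfloor>2^m * x$i\<rfloor>"
    using assms unfolding cube_at_def mem_dyadic_cube by (simp add: powr_realpow)
  then have "\<bar>2^m * y$i - 2^m * x$i\<bar> < 1" by linarith
  moreover have "\<bar>2^m * y$i - 2^m * x$i\<bar> = 2^m * \<bar>y$i - x$i\<bar>"
    by (simp add: abs_mult right_diff_distrib[symmetric])
  ultimately have "2^m * \<bar>y$i - x$i\<bar> < 1" by simp
  then show ?thesis by (simp add: field_simps)
qed

lemma cube_in_ball:
  fixes N :: "real^'n \<Rightarrow> real"
  assumes "is_norm N" "y \<in> cube_at (int m) x"
  shows "N (y - x) < Cn N / 2^m"
proof -
  have "N (y - x) \<le> (\<Sum>i\<in>UNIV. \<bar>(y - x)$i\<bar> * N (axis i 1))" by (rule norm_coord_bound[OF assms(1)])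
  also have "\<dots> < (\<Sum>i\<in>UNIV. (1/2^m) * N (axis i 1))"
  proof (rule sum_strict_mono)
    fix i :: 'n
    have "N (axis i 1) > 0"
      using is_normD(1,2)[OF assms(1), of "axis i 1"] by (auto simp: axis_eq_0_iff)
    then show "\<bar>(y - x)$i\<bar> * N (axis i 1) < (1/2^m) * N (axis i 1)"
      using cube_at_coord[OF assms(2), of i] by (intro mult_strict_right_mono) auto
  qed auto
  finally show ?thesis by (simp add: Cn_def sum_divide_distrib)
qed




lemma half_pow_small: "y > 0 \<Longrightarrow> \<exists>n. (1/2::real)^n < y"
  using real_arch_pow_inv[of y "1/2"] by auto

lemma summable_div_index:
  fixes v :: "nat \<Rightarrow> real"
  assumes v: "summable v" "\<And>n. v n \<ge> 0" and g: "g > 0"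
  shows "summable (\<lambda>n. v (n div g))"
proof -
  have blk: "(\<Sum>n<g*M. v (n div g)) = real g * (\<Sum>J<M. v J)" for M
  proof (induction M)
    case 0 then show ?case by simp
  next
    case (Suc M)
    have split: "{..<g * Suc M} = {..<g*M} \<union> {g*M..<g*M+g}" by auto
    have "(\<Sum>n\<in>{g*M..<g*M+g}. v (n div g)) = (\<Sum>n\<in>{g*M..<g*M+g}. v M)"
    proof (rule sum.cong)
      fix n assume "n \<in> {g*M..<g*M+g}"
      then have "n div g = M" using g by (auto intro: div_nat_eqI simp: mult.commute)
      then show "v (n div g) = v M" by simp
    qed simp
    then have "(\<Sum>n<g * Suc M. v (n div g)) = (\<Sum>n<g*M. v (n div g)) + real g * v M"
      unfolding split by (subst sum.union_disjoint) auto
    then show ?case using Suc by (simp add: algebra_simps)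
  qed
  show ?thesis
  proof (rule summableI_nonneg_bounded)
    fix N
    have "(\<Sum>n<N. v (n div g)) \<le> (\<Sum>n<g*N. v (n div g))"
      using g v(2) by (intro sum_mono2) auto
    also have "\<dots> = real g * (\<Sum>J<N. v J)" by (rule blk)
    also have "\<dots> \<le> real g * suminf v"
      using v by (intro mult_left_mono sum_le_suminf) auto
    finally show "(\<Sum>n<N. v (n div g)) \<le> real g * suminf v" .
  qed (use v in auto)
qed

lemma not_summable_min:
  fixes v :: "nat \<Rightarrow> real"
  assumes "\<not> summable v" "\<And>n. v n \<ge> 0" "c1 > 0" "c2 > 0"
  shows "\<not> summable (\<lambda>i. min c1 (c2 * v i))"
proof
  assume s: "summable (\<lambda>i. min c1 (c2 * v i))"
  then have "(\<lambda>i. min c1 (c2 * v i)) \<longlonglongrightarrow> 0" by (rule summable_LIMSEQ_zero)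
  then have "eventually (\<lambda>i. min c1 (c2 * v i) < c1) sequentially"
    using assms(3) by (rule order_tendstoD)
  then have "eventually (\<lambda>i. min c1 (c2 * v i) = c2 * v i) sequentially"
    by (rule eventually_mono) (simp add: min_def split: if_splits)
  then have "summable (\<lambda>i. min c1 (c2 * v i)) = summable (\<lambda>i. c2 * v i)" by (rule summable_cong)
  then have "summable (\<lambda>i. c2 * v i)" using s by simp
  then have "summable v" using assms(4) by (simp add: summable_cmult_iff)
  with assms(1) show False by simp
qed

lemma not_summable_unbounded:
  fixes w :: "nat \<Rightarrow> real"
  assumes "\<not> summable w" "\<And>n. w n \<ge> 0"
  shows "\<exists>k. (\<Sum>i<k. w i) > B"
proof (rule ccontr)
  assume "\<not> ?thesis"
  then have "\<forall>k. (\<Sum>i<k. w i) \<le> B" by (simp add: not_less)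
  then have "summable w" by (intro summableI_nonneg_bounded[of w B]) (use assms in auto)
  with assms show False by simp
qed

context
  fixes d :: nat and r :: "nat \<Rightarrow> real"
  assumes d: "d \<ge> 1" and P: "P_seq d r"
begin

lemma r_dec:
  assumes "1 \<le> a" "a \<le> b" shows "r b \<le> r a"
  using assms(2)
proof (induction b rule: dec_induct)
  case base then show ?case by simp
next
  case (step n)
  have "r (Suc n) \<le> r n" using P step assms(1) unfolding P_seq_def by auto
  with step show ?case by simp
qed

lemma r_nonneg: "1 \<le> n \<Longrightarrow> r n \<ge> 0"
proof (rule ccontr)
  assume n: "1 \<le> n" and "\<not> r n \<ge> 0"
  have "r \<longlonglongrightarrow> 0" using P unfolding P_seq_def by simp
  moreover have "\<exists>N. \<forall>m\<ge>N. r m \<le> r n" using r_dec n by blast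
  ultimately have "0 \<le> r n" by (rule LIMSEQ_le_const2)
  with \<open>\<not> r n \<ge> 0\<close> show False by simp
qed

lemma r_pos: "1 \<le> n \<Longrightarrow> r n > 0"
proof (rule ccontr)
  assume n: "1 \<le> n" and "\<not> r n > 0"
  then have z: "r n = 0" using r_nonneg by force
  have "eventually (\<lambda>m. r (Suc m) ^ d = 0) sequentially"
  proof (rule eventually_sequentiallyI[of n])
    fix m assume "n \<le> m"
    then have "r (Suc m) \<le> 0" "r (Suc m) \<ge> 0" using r_dec[of n "Suc m"] r_nonneg[of "Suc m"] n z by auto
    then show "r (Suc m) ^ d = 0" using d by simp
  qed
  then have "summable (\<lambda>m. r (Suc m) ^ d)" using summable_cong[of _ "\<lambda>_. 0::real"] by simp
  with P show False unfolding P_seq_def by simp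
qed

definition s :: "nat \<Rightarrow> real" where "s J = r (2 ^ (d * J))"
definition u :: "nat \<Rightarrow> real" where "u J = (2 ^ J * s J) ^ d"

lemma s_pos: "s J > 0" unfolding s_def by (rule r_pos) simp

lemma s_dec: "J \<le> J' \<Longrightarrow> s J' \<le> s J"
  unfolding s_def by (rule r_dec) (auto intro: power_increasing)

lemma u_nonneg: "u J \<ge> 0" unfolding u_def using s_pos[of J] by (intro zero_le_power mult_nonneg_nonneg) auto

lemma u_not_summable: "\<not> summable u"
proof
  assume us: "summable u"
  define f where "f n = (if n = 0 then 0 else r n ^ d)" for n
  have f_mono: "f (Suc m) \<le> f m" if "0 < m" for m
    unfolding f_def using that r_dec[of m "Suc m"] r_nonneg[of "Suc m"] by (auto intro: power_mono)
  have f_nn: "f n \<ge> 0" for n unfolding f_def using r_nonneg by auto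
  have "\<not> summable f"
  proof
    assume "summable f"
    then have "summable (\<lambda>n. f (Suc n))" by (simp add: summable_Suc_iff)
    then have "summable (\<lambda>n. r (Suc n) ^ d)" by (simp add: f_def)
    with P show False unfolding P_seq_def by simp
  qed
  then have ns: "\<not> summable (\<lambda>n. 2^n * f (2^n))" using condensation_test[of f, OF f_mono f_nn] by simp
  have bnd: "2^n * f (2^n) \<le> 2^d * u (n div d)" for n
  proof -
    define J where "J = n div d"
    have J1: "d * J \<le> n" unfolding J_def by simp
    have J2: "n \<le> d * J + d"
    proof -
      have "n = d * (n div d) + n mod d" by simp
      moreover have "n mod d < d" using d by simp
      ultimately show ?thesis unfolding J_def by linarith
    qed
    have "f (2^n) = r (2^n) ^ d" by (simp add: f_def)
    also have "\<dots> \<le> s J ^ d"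
      unfolding s_def using J1 r_nonneg[of "2^n"]
      by (intro power_mono r_dec) (auto intro: power_increasing)
    finally have a: "f (2^n) \<le> s J ^ d" .
    have b: "(2::real)^n \<le> 2^d * 2^(d*J)"
      using J2 by (simp add: power_add[symmetric] add.commute)
    have "2^n * f (2^n) \<le> 2^d * 2^(d*J) * s J ^ d"
      using a b f_nn by (intro mult_mono) auto
    also have "\<dots> = 2^d * u J" unfolding u_def by (simp add: power_mult_distrib power_mult mult.commute)
    finally show ?thesis unfolding J_def .
  qed
  have "summable (\<lambda>n. 2^d * u (n div d))"
    using summable_div_index[OF us u_nonneg, of d] d by (intro summable_mult) auto
  then have "summable (\<lambda>n. 2^n * f (2^n))"
    by (rule summable_comparison_test'[of _ 0]) (use bnd f_nn in auto)
  with ns show False by simp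
qed

lemma u_prog_not_summable:
  assumes g: "g > 0"
  shows "\<not> summable (\<lambda>i. u (J1 + g * i))"
proof
  assume sv: "summable (\<lambda>i. u (J1 + g * i))"
  have bnd: "u (J1 + n) \<le> (2^g)^d * u (J1 + g * (n div g))" for n
  proof -
    define J where "J = J1 + g * (n div g)"
    have J1: "J \<le> J1 + n" unfolding J_def by simp
    have J2: "J1 + n \<le> J + g"
    proof -
      have "n = g * (n div g) + n mod g" by simp
      moreover have "n mod g < g" using g by simp
      ultimately show ?thesis unfolding J_def by linarith
    qed
    have "s (J1 + n) \<le> s J" by (rule s_dec[OF J1])
    moreover have "(2::real)^(J1 + n) \<le> 2^g * 2^J" using J2 by (simp add: power_add[symmetric] add.commute)
    ultimately have "2^(J1+n) * s (J1 + n) \<le> 2^g * 2^J * s J"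
      using s_pos by (intro mult_mono) (auto simp: less_imp_le)
    then have "(2^(J1+n) * s (J1 + n))^d \<le> (2^g * 2^J * s J)^d"
      using s_pos by (intro power_mono) (auto simp: less_imp_le)
    then show ?thesis unfolding u_def J_def by (simp only: power_mult_distrib mult.assoc)
  qed
  have "summable (\<lambda>n. (2^g)^d * u (J1 + g * (n div g)))"
    using summable_div_index[OF sv _ g] u_nonneg by (intro summable_mult) auto
  then have "summable (\<lambda>n. u (n + J1))"
    by (rule summable_comparison_test'[of _ 0]) (use bnd u_nonneg in \<open>auto simp: add.commute\<close>)
  then have "summable u" by simp
  with u_not_summable show False by simp
qed


definition Lm :: "real \<Rightarrow> nat \<Rightarrow> nat \<Rightarrow> nat" where
  "Lm B0 c0 J = (LEAST L. B0 / 2^(J + c0 + L) \<le> s J)"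

definition mm :: "real \<Rightarrow> nat \<Rightarrow> nat \<Rightarrow> nat" where
  "mm B0 c0 J = J + c0 + Lm B0 c0 J"

lemma Lm_ex: "\<exists>L. B0 / 2^(J + c0 + L) \<le> s J"
proof -
  obtain L where L: "(1/2::real)^L < s J / (\<bar>B0\<bar> + 1)"
    using half_pow_small[of "s J / (\<bar>B0\<bar> + 1)"] s_pos[of J] by auto
  have "B0 / 2^(J + c0 + L) \<le> (\<bar>B0\<bar> + 1) * (1/2)^L"
  proof -
    have "B0 / 2^(J + c0 + L) \<le> \<bar>B0\<bar> / 2^(J + c0 + L)" by (simp add: divide_right_mono)
    also have "\<dots> \<le> \<bar>B0\<bar> / 2^L" by (intro divide_left_mono power_increasing) auto
    also have "\<dots> \<le> (\<bar>B0\<bar> + 1) * (1/2)^L" by (simp add: power_one_over divide_right_mono)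
    finally show ?thesis .
  qed
  also have "\<dots> \<le> s J" using L by (simp add: field_simps)
  finally show ?thesis by blast
qed

lemma mm_ball: "B0 / 2^(mm B0 c0 J) \<le> s J"
  unfolding mm_def Lm_def using LeastI_ex[OF Lm_ex[of B0 J c0]] by simp

lemma mm_ge: "J \<le> mm B0 c0 J" unfolding mm_def by simp

lemma t_upper: "(1/2::real)^(d * (mm B0 c0 J - J)) \<le> (1/2)^c0"
proof -
  have "c0 \<le> d * (mm B0 c0 J - J)" unfolding mm_def using d
    by (metis add.commute add_diff_cancel_right' le_add1 le_trans mult_le_mono1 mult_1 add.assoc)
  then show ?thesis by (intro power_decreasing) auto
qed

lemma t_lower:
  assumes B0: "B0 > 0"
  shows "(1/2::real)^(d * (mm B0 c0 J - J)) \<ge> min ((1/2)^(d*c0)) (u J / (2*B0)^d)"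
proof (cases "Lm B0 c0 J")
  case 0
  then have "mm B0 c0 J - J = c0" unfolding mm_def by simp
  then show ?thesis by simp
next
  case (Suc L)
  have "\<not> B0 / 2^(J + c0 + L) \<le> s J"
    using not_less_Least[of L "\<lambda>L. B0 / 2^(J + c0 + L) \<le> s J"] Suc unfolding Lm_def by simp
  then have lt: "s J < B0 / 2^(J + c0 + L)" by simp
  have mmv: "mm B0 c0 J = Suc (J + c0 + L)" unfolding mm_def using Suc by simp
  have "2^J * s J / (2 * B0) \<le> (1/2)^(mm B0 c0 J - J)"
  proof -
    have "2^J * s J < 2^J * (B0 / 2^(J + c0 + L))" using lt by (intro mult_strict_left_mono) auto
    also have "\<dots> = B0 * (1/2)^(c0 + L)"
      by (simp add: power_add field_simps)
    finally have "2^J * s J / (2*B0) < (1/2)^(Suc (c0 + L))" using B0 by (simp add: field_simps)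
    moreover have "mm B0 c0 J - J = Suc (c0 + L)" using mmv by simp
    ultimately show ?thesis by simp
  qed
  then have "(2^J * s J / (2 * B0))^d \<le> ((1/2)^(mm B0 c0 J - J))^d"
    using s_pos[of J] B0 by (intro power_mono) (auto simp: less_imp_le)
  then have "u J / (2*B0)^d \<le> (1/2::real)^(d * (mm B0 c0 J - J))"
    unfolding u_def by (simp add: power_divide power_mult[symmetric] mult.commute)
  then show ?thesis by simp
qed

end



lemma block_select:
  fixes w :: "nat \<Rightarrow> real"
  assumes ns: "\<not> summable w" and w0: "\<And>i. w i \<ge> 0" and w1: "\<And>i. w i \<le> \<alpha>/8" and al: "\<alpha> > 0"
  shows "\<exists>k. \<alpha>/8 \<le> (\<Sum>i<k. w i) \<and> (\<Sum>i<k. w i) \<le> \<alpha>/4"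
proof -
  obtain k0 where "(\<Sum>i<k0. w i) > \<alpha>/8" using not_summable_unbounded[OF ns w0] by blast
  then have ex: "\<exists>k. \<alpha>/8 \<le> (\<Sum>i<k. w i)" by (auto intro: less_imp_le)
  define k where "k = (LEAST k. \<alpha>/8 \<le> (\<Sum>i<k. w i))"
  have k1: "\<alpha>/8 \<le> (\<Sum>i<k. w i)" unfolding k_def by (rule LeastI_ex[OF ex])
  have "k \<noteq> 0"
  proof
    assume "k = 0" then show False using k1 al by simp
  qed
  then obtain k' where k': "k = Suc k'" by (cases k) auto
  have "\<not> \<alpha>/8 \<le> (\<Sum>i<k'. w i)" using not_less_Least[of k' "\<lambda>k. \<alpha>/8 \<le> (\<Sum>i<k. w i)"] k' unfolding k_def by simp
  then have "(\<Sum>i<k. w i) \<le> \<alpha>/4" using w1[of k'] unfolding k' by simp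
  with k1 show ?thesis by blast
qed


lemma pow2_powr_nat: "(2::real) powr (real d * real_of_int (int J)) = 2 ^ (d * J)"
  by (simp add: powr_realpow[symmetric] of_nat_mult)

lemma card_pos_finite: "real (card S) \<ge> c \<Longrightarrow> c > 0 \<Longrightarrow> finite S"
  using card.infinite by fastforce

lemma core:
  fixes N :: "real^'n \<Rightarrow> real" and xs :: "nat \<Rightarrow> real^'n" and r :: "nat \<Rightarrow> real" and x0 :: "real^'n"
  assumes nrm: "is_norm N" and P: "P_seq CARD('n) r" and K: "K \<ge> 1" and al: "\<alpha> > 0"
    and hyp: "\<And>j. jl \<le> j \<Longrightarrow> real (card (Mset xs (cube_at (int j0) x0) j)) \<ge> \<alpha> * 2 ^ (CARD('n) * j)"
  shows "\<exists>A. A \<in> lmeasurable \<and> A \<subseteq> cube_at (int j0) x0 \<and> (\<forall>y\<in>A. \<exists>n\<ge>K. N (y - xs n) < r n)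
           \<and> measure lebesgue A \<ge> (1/2)^(CARD('n)*j0) * (\<alpha>^2/64)"
proof -
  define d where "d = CARD('n)"
  have d1: "d \<ge> 1" unfolding d_def by (simp add: Suc_le_eq)
  have Pd: "P_seq d r" using P unfolding d_def .
  define lam where "lam = cube_at (int j0) x0"
  define V0 where "V0 = (1/2::real)^(d*j0)"
  have V0pos: "V0 > 0" unfolding V0_def by simp
  have lam_meas: "measure lebesgue lam = V0" unfolding lam_def V0_def d_def by (rule cube_at_measure)
  define B0 where "B0 = Cn N"
  have B0: "B0 > 0" unfolding B0_def by (rule Cn_pos[OF nrm])
  obtain c0 where c0: "(1/2::real)^c0 < \<alpha>/8" using half_pow_small[of "\<alpha>/8"] al by auto
  obtain g' where g': "(1/2::real)^g' < \<alpha>/8" using half_pow_small[of "\<alpha>/8"] al by auto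
  define g where "g = Suc g'"
  obtain e where e: "(1/2::real)^e < \<alpha>/(2 * real K)" using half_pow_small[of "\<alpha>/(2 * real K)"] al K by auto
  define J1 where "J1 = j0 + jl + e"
  define J where "J i = J1 + g * i" for i
  define m where "m i = mm d r B0 c0 (J i)" for i
  define t where "t i = (1/2::real)^(d * (m i - J i))" for i
  have Jm: "J i \<le> m i" for i unfolding m_def by (rule mm_ge[OF d1 Pd])
  have t0: "t i \<ge> 0" for i unfolding t_def by simp
  have t1: "t i \<le> \<alpha>/8" for i
    using t_upper[OF d1 Pd, of B0 c0 "J i"] c0 unfolding t_def m_def by linarith
  have tns: "\<not> summable t"
  proof
    assume st: "summable t"
    have "summable (\<lambda>i. min ((1/2)^(d*c0)) (u d r (J i) / (2*B0)^d))"
    proof (rule summable_comparison_test'[OF st])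
      fix i :: nat
      have "min ((1/2)^(d*c0)) (u d r (J i) / (2*B0)^d) \<le> t i"
        using t_lower[OF d1 Pd B0, of c0 "J i"] unfolding t_def m_def by simp
      moreover have "0 \<le> min ((1/2::real)^(d*c0)) (u d r (J i) / (2*B0)^d)"
        using u_nonneg[OF d1 Pd, of "J i"] B0 by simp
      ultimately show "norm (min ((1/2::real)^(d*c0)) (u d r (J i) / (2*B0)^d)) \<le> t i" by simp
    qed
    moreover have "\<not> summable (\<lambda>i. min ((1/2::real)^(d*c0)) (1/(2*B0)^d * u d r (J i)))"
      using u_prog_not_summable[OF d1 Pd, of g J1] u_nonneg[OF d1 Pd] B0 d1 Pd
      unfolding J_def g_def by (intro not_summable_min) auto
    ultimately show False by (simp add: mult.commute)
  qed
  obtain k where k: "\<alpha>/8 \<le> (\<Sum>i<k. t i)" "(\<Sum>i<k. t i) \<le> \<alpha>/4"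
    using block_select[OF tns t0 t1 al] by blast
  define M where "M i = Mset xs lam (J i - j0)" for i
  define C where "C i = {Q \<in> M i. \<exists>n. K \<le> n \<and> real n \<le> 2^(d * J i) \<and> xs n \<in> Q}" for i
  define nq where "nq i Q = (SOME n. K \<le> n \<and> real n \<le> 2^(d * J i) \<and> xs n \<in> Q)" for i Q
  define pt where "pt i Q = xs (nq i Q)" for i Q
  define Ps where "Ps i = pt i ` C i" for i
  define A where "A i = (\<Union>p\<in>Ps i. cube_at (int (m i)) p)" for i
  have Jge: "j0 + jl \<le> J i" for i unfolding J_def J1_def by simp
  have JgeE: "j0 + jl + e \<le> J i" for i unfolding J_def J1_def by simp
  have genlam: "generation lam = int j0" unfolding lam_def by (rule generation_cube_at)
  have F1: "Q \<subseteq> lam \<and> (\<exists>n\<ge>1. real n \<le> 2^(d * J i) \<and> xs n \<in> Q) \<and> (\<forall>z\<in>Q. cube_at (int (J i)) z = Q)"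
    if Q: "Q \<in> M i" for i Q
  proof -
    have QM: "is_dyadic Q" "Q \<subseteq> lam" "generation Q = generation lam + int (J i - j0)"
      "\<exists>n\<ge>1. real n \<le> 2 powr (real CARD('n) * real_of_int (generation Q)) \<and> xs n \<in> Q"
      using Q unfolding M_def Mset_def by auto
    have gQ: "generation Q = int (J i)" using QM(3) genlam Jge[of i] by simp
    obtain jj kk where Qd: "Q = dyadic_cube jj kk" using QM(1) unfolding is_dyadic_def by blast
    have "jj = int (J i)" using gQ unfolding Qd generation_dyadic .
    then have "\<forall>z\<in>Q. cube_at (int (J i)) z = Q" unfolding Qd using cube_at_eq by blast
    moreover have "\<exists>n\<ge>1. real n \<le> 2^(d * J i) \<and> xs n \<in> Q"
      using QM(4) unfolding gQ d_def pow2_powr_nat .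
    ultimately show ?thesis using QM(2) by blast
  qed
  have F2: "K \<le> nq i Q \<and> real (nq i Q) \<le> 2^(d * J i) \<and> pt i Q \<in> Q" if "Q \<in> C i" for i Q
  proof -
    have "\<exists>n. K \<le> n \<and> real n \<le> 2^(d * J i) \<and> xs n \<in> Q" using that unfolding C_def by blast
    then show ?thesis unfolding pt_def nq_def by (rule someI_ex)
  qed
  have CM: "C i \<subseteq> M i" for i unfolding C_def by blast
  have ptQ: "cube_at (int (J i)) (pt i Q) = Q" if "Q \<in> C i" for i Q
    using F1[OF subsetD[OF CM that]] F2[OF that] by blast
  have inj_pt: "inj_on (pt i) (C i)" for i
    by (rule inj_onI) (metis ptQ)
  have injP: "inj_on (cube_at (int (J i))) (Ps i)" for i
    unfolding Ps_def by (rule inj_onI) (auto simp: ptQ)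
  have finM: "finite (M i)" for i
  proof (rule card_pos_finite)
    show "real (card (M i)) \<ge> \<alpha> * 2 ^ (CARD('n) * (J i - j0))"
      unfolding M_def lam_def using hyp Jge[of i] by simp
  qed (use al in simp)
  have finC: "finite (C i)" for i using finM CM finite_subset by blast
  have finP: "finite (Ps i)" for i unfolding Ps_def using finC by simp
  have cardP: "card (Ps i) = card (C i)" for i unfolding Ps_def using inj_pt by (simp add: card_image)
  have F6: "card (M i) \<le> card (C i) + K" for i
  proof -
    have "M i - C i \<subseteq> (\<lambda>n. cube_at (int (J i)) (xs n)) ` {..<K}"
    proof
      fix Q assume Q: "Q \<in> M i - C i"
      obtain n where n: "n \<ge> 1" "real n \<le> 2^(d * J i)" "xs n \<in> Q" using F1[of Q i] Q by blast
      have "\<not> (\<exists>n'. K \<le> n' \<and> real n' \<le> 2^(d * J i) \<and> xs n' \<in> Q)" using Q unfolding C_def by blast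
      then have "n < K" using n by (meson not_le)
      moreover have "cube_at (int (J i)) (xs n) = Q" using F1[of Q i] Q n by blast
      ultimately show "Q \<in> (\<lambda>n. cube_at (int (J i)) (xs n)) ` {..<K}" by blast
    qed
    then have "card (M i - C i) \<le> K" by (metis card_image_le card_lessThan finite_lessThan le_trans card_mono finite_imageI)
    moreover have "card (M i) = card (C i) + card (M i - C i)"
      using finM CM by (metis card_Diff_subset finite_subset le_add_diff_inverse card_mono)
    ultimately show ?thesis by simp
  qed
  have F7: "cube_at (int (J i)) p \<subseteq> lam" if pP: "p \<in> Ps i" for i p
  proof -
    obtain Q where Q: "Q \<in> C i" "p = pt i Q" using pP unfolding Ps_def by blast
    show ?thesis using ptQ[OF Q(1)] F1[OF subsetD[OF CM Q(1)]] Q(2) by simp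
  qed
  have F8: "real (card (Ps i)) * (1/2)^(d * J i) \<le> V0" for i
  proof -
    have "finite (Ps i) \<and> real (card (Ps i)) * (1/2)^(CARD('n) * J i) \<le> measure lebesgue lam"
      by (rule points_count[OF injP]) (use F7 in \<open>auto simp: lam_def cube_at_lmeasurable\<close>)
    then show ?thesis using lam_meas unfolding d_def by simp
  qed
  have F9: "real (card (Ps i)) * (1/2)^(d * J i) \<ge> (\<alpha>/2) * V0" for i
  proof -
    have "real (card (M i)) \<ge> \<alpha> * 2 ^ (d * (J i - j0))"
      unfolding M_def lam_def d_def using hyp Jge[of i] by simp
    then have "real (card (Ps i)) \<ge> \<alpha> * 2 ^ (d * (J i - j0)) - real K"
      using F6[of i] cardP[of i] by linarith
    then have "real (card (Ps i)) * (1/2)^(d * J i) \<ge> (\<alpha> * 2 ^ (d * (J i - j0)) - real K) * (1/2)^(d * J i)"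
      by (rule mult_right_mono) simp
    moreover have "\<alpha> * 2 ^ (d * (J i - j0)) * (1/2)^(d * J i) = \<alpha> * V0"
    proof -
      have "(1/2::real)^(d * J i) = (1/2)^(d * (J i - j0)) * V0"
        unfolding V0_def using Jge[of i] by (subst power_add[symmetric]) (simp add: diff_mult_distrib2)
      then show ?thesis by (simp add: power_one_over)
    qed
    moreover have "real K * (1/2)^(d * J i) \<le> (\<alpha>/2) * V0"
    proof -
      have "(1/2::real)^(d * J i) = (1/2)^(d * (J i - j0)) * V0"
        unfolding V0_def using Jge[of i] by (subst power_add[symmetric]) (simp add: diff_mult_distrib2)
      moreover have X: "(1/2::real)^(d * (J i - j0)) \<le> (1/2)^e"
      proof (rule power_decreasing)
        show "e \<le> d * (J i - j0)" using JgeE[of i] d1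
          by (metis add.assoc add_diff_cancel_left' diff_le_mono le_add2 le_trans mult_le_mono1 mult_1)
      qed auto
      moreover have "real K * (1/2::real)^e \<le> \<alpha>/2" using e K by (simp add: field_simps)
      ultimately have "real K * (1/2)^(d * J i) \<le> real K * (1/2)^e * V0"
      proof -
        assume eq: "(1/2::real)^(d * J i) = (1/2)^(d * (J i - j0)) * V0"
        have "real K * (1/2)^(d * J i) = real K * (1/2)^(d * (J i - j0)) * V0" using eq by simp
        also have "\<dots> \<le> real K * (1/2)^e * V0"
          using X V0pos by (intro mult_right_mono mult_left_mono) auto
        finally show ?thesis .
      qed
      also have "\<dots> \<le> (\<alpha>/2) * V0" using \<open>real K * (1/2::real)^e \<le> \<alpha>/2\<close> V0pos by (intro mult_right_mono) auto
      finally show ?thesis .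
    qed
    ultimately show ?thesis by (simp add: left_diff_distrib)
  qed
  have Alm: "A i \<in> lmeasurable" for i unfolding A_def by (rule scale_lmeasurable[OF finP])
  have Ameas: "measure lebesgue (A i) = real (card (Ps i)) * (1/2)^(d * J i) * t i" for i
  proof -
    have "measure lebesgue (A i) = real (card (Ps i)) * (1/2)^(d * m i)"
      unfolding A_def d_def by (rule scale_measure[OF finP injP Jm])
    moreover have "(1/2::real)^(d * m i) = (1/2)^(d * J i) * t i"
    proof -
      have "d * J i + d * (m i - J i) = d * m i" using Jm[of i] by (simp add: add_mult_distrib2[symmetric])
      then show ?thesis unfolding t_def by (metis power_add)
    qed
    ultimately show ?thesis by simp
  qed
  have Asub: "A i \<subseteq> lam" for i
    unfolding A_def using F7 cube_nested[of "int (J i)" "int (m i)"] Jm by fastforce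
  have Aball: "\<exists>n\<ge>K. N (y - xs n) < r n" if yA: "y \<in> A i" for i y
  proof -
    obtain p where p: "p \<in> Ps i" "y \<in> cube_at (int (m i)) p" using yA unfolding A_def by blast
    obtain Q where Q: "Q \<in> C i" "p = pt i Q" using p(1) unfolding Ps_def by blast
    define n where "n = nq i Q"
    have n: "K \<le> n" "real n \<le> 2^(d * J i)" "p = xs n" using F2[OF Q(1)] Q(2) unfolding n_def pt_def by auto
    have "N (y - xs n) < Cn N / 2^(m i)" using cube_in_ball[OF nrm, of y "m i" p] p n by simp
    also have "\<dots> \<le> s d r (J i)" using mm_ball[OF d1 Pd, of B0 c0 "J i"] unfolding m_def B0_def .
    also have "\<dots> \<le> r n"
    proof -
      have "n \<le> 2^(d * J i)" using n(2) by (metis of_nat_le_iff of_nat_numeral of_nat_power)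
      then show ?thesis unfolding s_def[OF d1 Pd] using K n(1) by (intro r_dec[OF d1 Pd]) auto
    qed
    finally show ?thesis using n(1) by blast
  qed
  have pair: "measure lebesgue (A i' \<inter> A i) \<le> V0 * (t i' * t i + ((1/2)^g) ^ (i - i') * t i)" if "i' < i" for i i'
  proof -
    have "measure lebesgue (A i' \<inter> A i) \<le> real (card (Ps i')) * 2 ^ (d * (J i - m i')) * (1/2) ^ (d * m i)"
      unfolding A_def d_def by (rule pair_bound[OF finP finP injP Jm])
    also have "\<dots> \<le> V0 * (t i' * t i + (1/2)^(d*(J i - J i')) * t i)"
    proof -
      have "J i' \<le> J i" using that unfolding J_def by simp
      then show ?thesis unfolding t_def
        using pair_norm[of "J i'" "m i'" "J i" "m i" "real (card (Ps i'))" d V0] Jm F8[of i'] by simp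
    qed
    also have "\<dots> \<le> V0 * (t i' * t i + ((1/2)^g) ^ (i - i') * t i)"
    proof -
      have "J i - J i' = g * (i - i')" unfolding J_def using that by (simp add: diff_mult_distrib2)
      then have "(1/2::real)^(d*(J i - J i')) \<le> ((1/2)^g) ^ (i - i')"
        unfolding power_mult[symmetric] using d1 by (intro power_decreasing) auto
      then show ?thesis using V0pos t0[of i] by (intro mult_left_mono add_left_mono mult_right_mono) auto
    qed
    finally show ?thesis .
  qed
  define Aall where "Aall = (\<Union>i<k. A i)"
  have "measure lebesgue Aall \<ge> (\<Sum>i<k. measure lebesgue (A i)) - (\<Sum>i<k. \<Sum>i'<i. measure lebesgue (A i' \<inter> A i))"
    unfolding Aall_def by (rule bonferroni) (rule Alm)
  moreover have "(\<Sum>i<k. measure lebesgue (A i)) - (\<Sum>i<k. \<Sum>i'<i. measure lebesgue (A i' \<inter> A i)) \<ge> V0 * (\<alpha>^2/64)"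
  proof (rule block_estimate[OF _ _ _ _ _ _ k V0pos[THEN less_imp_le] al])
    show "\<And>i. i < k \<Longrightarrow> 0 \<le> t i" by (rule t0)
    show "(\<alpha>/2) * V0 * t i \<le> measure lebesgue (A i)" for i
      unfolding Ameas by (rule mult_right_mono[OF F9 t0])
    show "measure lebesgue (A i' \<inter> A i) \<le> V0 * (t i' * t i + ((1/2)^g) ^ (i - i') * t i)" if "i < k" "i' < i" for i i'
      using pair that by simp
    show "0 \<le> (1/2::real)^g" by simp
    show "(1/2::real)^g \<le> 1/2" unfolding g_def by (simp add: power_le_one)
    show "2 * (1/2::real)^g \<le> \<alpha>/8" using g' unfolding g_def by simp
  qed
  ultimately have "measure lebesgue Aall \<ge> V0 * (\<alpha>^2/64)" by linarith
  moreover have "Aall \<in> lmeasurable" unfolding Aall_def using Alm by (intro fmeasurable.finite_UN) auto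
  moreover have "Aall \<subseteq> cube_at (int j0) x0" unfolding Aall_def lam_def[symmetric] using Asub by blast
  moreover have "\<forall>y\<in>Aall. \<exists>n\<ge>K. N (y - xs n) < r n" unfolding Aall_def using Aball by blast
  ultimately show ?thesis unfolding V0_def d_def by (intro exI[of _ Aall]) (simp add: mult.commute)
qed




lemma cube_small:
  fixes x :: "real^'n"
  assumes "\<delta> > 0"
  shows "\<exists>J0. \<forall>J\<ge>J0. cube_at (int J) x \<subseteq> ball x \<delta>"
proof -
  obtain J0 where J0: "(1/2::real)^J0 < \<delta> / real CARD('n)" using half_pow_small[of "\<delta> / real CARD('n)"] assms by auto
  have "cube_at (int J) x \<subseteq> ball x \<delta>" if "J \<ge> J0" for J
  proof
    fix y assume y: "y \<in> cube_at (int J) x"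
    have "dist x y = norm (y - x)" by (simp add: dist_norm norm_minus_commute)
    also have "\<dots> \<le> (\<Sum>i\<in>UNIV. \<bar>(y - x)$i\<bar>)" by (rule norm_le_l1_cart)
    also have "\<dots> < (\<Sum>i\<in>(UNIV::'n set). 1/2^J)"
      by (rule sum_strict_mono) (use cube_at_coord[OF y] in auto)
    also have "\<dots> = real CARD('n) * (1/2)^J" by (simp add: power_one_over)
    also have "\<dots> \<le> real CARD('n) * (1/2)^J0" by (intro mult_left_mono power_decreasing that) auto
    also have "\<dots> < \<delta>" using J0 by (simp add: field_simps)
    finally show "y \<in> ball x \<delta>" by simp
  qed
  then show ?thesis by blast
qed

lemma density:
  fixes E :: "(real^'n) set"
  assumes E: "E \<in> lmeasurable" and mE: "measure lebesgue E > 0" and eps: "0 < \<epsilon>" "\<epsilon> < 1"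
  shows "\<exists>j0\<ge>J0. \<exists>x0\<in>E. measure lebesgue (E \<inter> cube_at (int j0) x0) > (1 - \<epsilon>) * (1/2)^(CARD('n)*j0)"
proof -
  define mE where "mE = measure lebesgue E"
  define \<eta> where "\<eta> = \<epsilon> * mE / 2"
  have eta: "\<eta> > 0" unfolding \<eta>_def mE_def using mE eps by simp
  obtain Op where Op: "open Op" "E \<subseteq> Op" "Op - E \<in> lmeasurable" "emeasure lebesgue (Op - E) < ennreal \<eta>"
    using sets_lebesgue_outer_open[OF fmeasurableD[OF E] eta] by blast
  have Olm: "Op \<in> lmeasurable"
  proof -
    have "Op = E \<union> (Op - E)" using Op by blast
    moreover have "E \<union> (Op - E) \<in> lmeasurable" by (rule fmeasurable.Un[OF E Op(3)])
    ultimately show ?thesis by simp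
  qed
  have mO: "measure lebesgue Op < mE + \<eta>"
  proof -
    have "emeasure lebesgue (Op - E) = measure lebesgue (Op - E)" by (rule emeasure_eq_measure2[OF Op(3)])
    then have "ennreal (measure lebesgue (Op - E)) < ennreal \<eta>" using Op(4) by simp
    then have "measure lebesgue (Op - E) < \<eta>" using ennreal_less_iff[of "measure lebesgue (Op - E)" \<eta>] by simp
    moreover have "measure lebesgue (Op - E) = measure lebesgue Op - measure lebesgue E"
    proof (rule measure_Diff[OF _ fmeasurableD[OF Olm] fmeasurableD[OF E] Op(2)])
      show "emeasure lebesgue Op \<noteq> \<infinity>" using fmeasurableD2[OF Olm] by simp
    qed
    then have "measure lebesgue Op = mE + measure lebesgue (Op - E)" unfolding mE_def by simp
    ultimately show ?thesis by simp
  qed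
  define F where "F J = {cube_at (int J) x | x. cube_at (int J) x \<subseteq> Op}" for J
  define OJ where "OJ J = \<Union>(F J)" for J
  have Fcube: "Q \<in> lmeasurable \<and> measure lebesgue Q = (1/2)^(CARD('n)*J) \<and> Q \<subseteq> Op" if "Q \<in> F J" for Q J
    using that unfolding F_def by (auto simp: cube_at_lmeasurable cube_at_measure)
  have Fdis: "pairwise disjnt (F J)" for J
  proof (rule pairwiseI)
    fix Q Q' assume "Q \<in> F J" "Q' \<in> F J" "Q \<noteq> Q'"
    then obtain x y where "Q = cube_at (int J) x" "Q' = cube_at (int J) y" unfolding F_def by blast
    then show "disjnt Q Q'" using cube_at_disjoint[of "int J" x y] \<open>Q \<noteq> Q'\<close> unfolding disjnt_def by simp
  qed
  have finF: "finite (F J)" for J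
    using disjoint_count[OF Fcube Fdis Olm] by simp
  have OJlm: "OJ J \<in> lmeasurable" for J
    unfolding OJ_def using finF Fcube by (intro fmeasurable.finite_Union) auto
  have OJ_iff: "x \<in> OJ J \<longleftrightarrow> cube_at (int J) x \<subseteq> Op" for x J
  proof
    assume "x \<in> OJ J"
    then obtain y where "x \<in> cube_at (int J) y" "cube_at (int J) y \<subseteq> Op" unfolding OJ_def F_def by blast
    then show "cube_at (int J) x \<subseteq> Op" using cube_at_same[of x "int J" y] by simp
  next
    assume "cube_at (int J) x \<subseteq> Op"
    then show "x \<in> OJ J" unfolding OJ_def F_def using cube_at_mem by blast
  qed
  have inc: "incseq (\<lambda>J. E \<inter> OJ J)"
  proof (rule incseq_SucI)
    fix J
    show "E \<inter> OJ J \<subseteq> E \<inter> OJ (Suc J)"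
    proof
      fix x assume x: "x \<in> E \<inter> OJ J"
      then have "cube_at (int J) x \<subseteq> Op" using OJ_iff by blast
      moreover have "cube_at (int (Suc J)) x \<subseteq> cube_at (int J) x" by (rule cube_nested) simp
      ultimately have "x \<in> OJ (Suc J)" using OJ_iff by blast
      then show "x \<in> E \<inter> OJ (Suc J)" using x by blast
    qed
  qed
  have UE: "(\<Union>J. E \<inter> OJ J) = E"
  proof
    show "E \<subseteq> (\<Union>J. E \<inter> OJ J)"
    proof
      fix x assume x: "x \<in> E"
      then have "x \<in> Op" using Op by blast
      then obtain \<delta> where "\<delta> > 0" "ball x \<delta> \<subseteq> Op" using Op(1) open_contains_ball by blast
      then obtain J where "\<forall>J'\<ge>J. cube_at (int J') x \<subseteq> ball x \<delta>" using cube_small[of \<delta> x] by blast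
      then have "cube_at (int J) x \<subseteq> ball x \<delta>" by simp
      then have "x \<in> OJ J" unfolding OJ_iff using \<open>ball x \<delta> \<subseteq> Op\<close> by blast
      then show "x \<in> (\<Union>J. E \<inter> OJ J)" using x by blast
    qed
  qed blast
  have "(\<lambda>J. measure lebesgue (E \<inter> OJ J)) \<longlonglongrightarrow> measure lebesgue (\<Union>J. E \<inter> OJ J)"
  proof (rule Lim_measure_incseq)
    show "range (\<lambda>J. E \<inter> OJ J) \<subseteq> sets lebesgue"
      using E OJlm by (auto intro!: sets.Int fmeasurableD)
    show "emeasure lebesgue (\<Union>J. E \<inter> OJ J) \<noteq> \<infinity>"
      unfolding UE using fmeasurableD2[OF E] by simp
  qed (rule inc)
  then have "(\<lambda>J. measure lebesgue (E \<inter> OJ J)) \<longlonglongrightarrow> mE" unfolding UE mE_def .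
  then have "eventually (\<lambda>J. measure lebesgue (E \<inter> OJ J) > mE - \<eta>) sequentially"
    using eta by (intro order_tendstoD) auto
  then obtain N0 where N0: "\<And>n. n \<ge> N0 \<Longrightarrow> measure lebesgue (E \<inter> OJ n) > mE - \<eta>"
    unfolding eventually_sequentially by blast
  define J where "J = max N0 J0"
  have J: "J \<ge> J0" "measure lebesgue (E \<inter> OJ J) > mE - \<eta>" using N0[of J] unfolding J_def by auto
  have "\<exists>Q\<in>F J. measure lebesgue (E \<inter> Q) > (1 - \<epsilon>) * (1/2)^(CARD('n)*J)"
  proof (rule ccontr)
    assume neg: "\<not> ?thesis"
    have le: "measure lebesgue (E \<inter> Q) \<le> (1 - \<epsilon>) * measure lebesgue Q" if QF: "Q \<in> F J" for Q
    proof -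
      have "measure lebesgue Q = (1/2)^(CARD('n)*J)" using Fcube[OF QF] by blast
      moreover have "\<not> measure lebesgue (E \<inter> Q) > (1 - \<epsilon>) * (1/2)^(CARD('n)*J)" using neg QF by blast
      ultimately show ?thesis by simp
    qed
    have EOJ: "E \<inter> OJ J = (\<Union>Q\<in>F J. E \<inter> Q)" unfolding OJ_def by blast
    have "measure lebesgue (E \<inter> OJ J) = (\<Sum>Q\<in>F J. measure lebesgue (E \<inter> Q))"
      unfolding EOJ
    proof (rule measure_UNION'[OF finF])
      show "pairwise (\<lambda>Q Q'. disjnt (E \<inter> Q) (E \<inter> Q')) (F J)"
        using Fdis[of J] unfolding pairwise_def disjnt_def by blast
      fix Q assume "Q \<in> F J"
      then have "Q \<in> lmeasurable" using Fcube by blast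
      then show "E \<inter> Q \<in> lmeasurable" by (rule fmeasurable.Int[OF E])
    qed
    also have "\<dots> \<le> (\<Sum>Q\<in>F J. (1 - \<epsilon>) * measure lebesgue Q)" by (rule sum_mono) (rule le)
    also have "\<dots> = (1 - \<epsilon>) * measure lebesgue (OJ J)"
    proof -
      have "measure lebesgue (OJ J) = (\<Sum>Q\<in>F J. measure lebesgue Q)"
        unfolding OJ_def
      proof (rule measure_Union'[OF finF _ Fdis])
        fix Q assume "Q \<in> F J" then show "Q \<in> lmeasurable" using Fcube by blast
      qed
      then show ?thesis by (simp add: sum_distrib_left)
    qed
    also have "\<dots> \<le> (1 - \<epsilon>) * measure lebesgue Op"
    proof (rule mult_left_mono)
      have "OJ J \<subseteq> Op" unfolding OJ_def using Fcube by blast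
      then show "measure lebesgue (OJ J) \<le> measure lebesgue Op"
        by (rule measure_mono_fmeasurable[OF _ fmeasurableD[OF OJlm] Olm])
    qed (use eps in simp)
    also have "\<dots> \<le> (1 - \<epsilon>) * (mE + \<eta>)" using mO eps by (intro mult_left_mono) auto
    finally have "mE - \<eta> < (1 - \<epsilon>) * (mE + \<eta>)" using J by linarith
    moreover have "(1 - \<epsilon>) * (mE + \<eta>) = mE + \<eta> - \<epsilon> * mE - \<epsilon> * \<eta>" by (simp add: algebra_simps)
    moreover have "\<epsilon> * \<eta> > 0" using eps eta by simp
    moreover have "2 * \<eta> = \<epsilon> * mE" unfolding \<eta>_def by simp
    ultimately show False by linarith
  qed
  then obtain Q where Q: "Q \<in> F J" "measure lebesgue (E \<inter> Q) > (1 - \<epsilon>) * (1/2)^(CARD('n)*J)" by blast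
  have "E \<inter> Q \<noteq> {}"
  proof
    assume "E \<inter> Q = {}"
    then have "measure lebesgue (E \<inter> Q) = 0" by simp
    moreover have "(1 - \<epsilon>) * (1/2::real)^(CARD('n)*J) > 0" using eps by simp
    ultimately show False using Q(2) by linarith
  qed
  then obtain x0 where x0: "x0 \<in> E" "x0 \<in> Q" by blast
  obtain y where "Q = cube_at (int J) y" using Q(1) unfolding F_def by blast
  then have "Q = cube_at (int J) x0" using x0 cube_at_same[of x0 "int J" y] by simp
  then show ?thesis using Q x0 J by blast
qed




lemma cube_pred_sets:
  fixes Pr :: "(real^'n) set \<Rightarrow> bool"
  shows "{x::real^'n. Pr (cube_at j x)} \<in> sets lebesgue"
proof -
  have eq: "{x::real^'n. Pr (cube_at j x)} = (\<Union>k\<in>{k. Pr (dyadic_cube j k)}. dyadic_cube j k)"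
  proof
    show "{x. Pr (cube_at j x)} \<subseteq> (\<Union>k\<in>{k. Pr (dyadic_cube j k)}. dyadic_cube j k)"
      using cube_at_mem unfolding cube_at_def by fastforce
    show "(\<Union>k\<in>{k. Pr (dyadic_cube j k)}. dyadic_cube j k) \<subseteq> {x. Pr (cube_at j x)}"
      using cube_at_eq by fastforce
  qed
  show ?thesis unfolding eq
    by (intro sets.countable_UN') (auto intro: fmeasurableD dyadic_cube_lmeasurable)
qed

lemma bad_closed:
  fixes N :: "real^'n \<Rightarrow> real"
  assumes nrm: "is_norm N"
  shows "closed {x. \<forall>n\<ge>K. r n \<le> N (x - xs n)}"
proof -
  have "{x. \<forall>n\<ge>K. r n \<le> N (x - xs n)} = (\<Inter>n\<in>{K..}. {x. r n \<le> N (x - xs n)})" by auto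
  moreover have "closed {x. r n \<le> N (x - xs n)}" for n
  proof (rule closed_Collect_le)
    show "continuous_on UNIV (\<lambda>x. N (x - xs n))"
      by (rule continuous_on_compose2[OF norm_lipschitz[OF nrm]]) (auto intro!: continuous_intros)
  qed simp
  ultimately show ?thesis by (simp add: closed_INT)
qed


lemma E_null:
  fixes N :: "real^'n \<Rightarrow> real" and xs :: "nat \<Rightarrow> real^'n" and r :: "nat \<Rightarrow> real"
  assumes nrm: "is_norm N" and P: "P_seq CARD('n) r"
  shows "({x. \<forall>n\<ge>Suc K. r n \<le> N (x - xs n)} \<inter>
          (\<Inter>j0. \<Inter>j. {x. jl \<le> j0 \<and> jl \<le> j \<longrightarrow> real (card (Mset xs (cube_at (int j0) x) j)) \<ge> 1 / real (Suc p) * 2^(CARD('n)*j)})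
          \<inter> cball 0 (real R)) \<in> null_sets lebesgue" (is "?E \<in> _")
proof -
  define \<alpha> where "\<alpha> = 1 / real (Suc p)"
  have al: "\<alpha> > 0" "\<alpha> \<le> 1" unfolding \<alpha>_def by simp_all
  define c where "c = \<alpha>^2/64"
  have a2: "\<alpha>^2 \<le> 1" using al by (intro power_le_one) auto
  have c: "0 < c" "c < 1" unfolding c_def using al a2 by simp_all
  have s1: "{x. \<forall>n\<ge>Suc K. r n \<le> N (x - xs n)} \<in> sets lebesgue"
  proof -
    have "{x. \<forall>n\<ge>Suc K. r n \<le> N (x - xs n)} \<in> sets borel"
      using bad_closed[OF nrm, of "Suc K" r xs] by (rule borel_closed)
    then show ?thesis by (rule sets_completionI_sets[of _ lborel, unfolded sets_lborel])
  qed
  have s2: "(\<Inter>j0. \<Inter>j. {x::real^'n. jl \<le> j0 \<and> jl \<le> j \<longrightarrow> real (card (Mset xs (cube_at (int j0) x) j)) \<ge> 1 / real (Suc p) * 2^(CARD('n)*j)}) \<in> sets lebesgue"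
  proof (rule sets.countable_INT'')
    show "UNIV \<in> sets (lebesgue :: (real^'n) measure)" using sets.top[of "lebesgue :: (real^'n) measure"] by simp
    fix j0 :: nat
    show "(\<Inter>j. {x::real^'n. jl \<le> j0 \<and> jl \<le> j \<longrightarrow> real (card (Mset xs (cube_at (int j0) x) j)) \<ge> 1 / real (Suc p) * 2^(CARD('n)*j)}) \<in> sets lebesgue"
    proof (rule sets.countable_INT'')
      show "UNIV \<in> sets (lebesgue :: (real^'n) measure)" using sets.top[of "lebesgue :: (real^'n) measure"] by simp
      fix j :: nat
      show "{x::real^'n. jl \<le> j0 \<and> jl \<le> j \<longrightarrow> real (card (Mset xs (cube_at (int j0) x) j)) \<ge> 1 / real (Suc p) * 2^(CARD('n)*j)} \<in> sets lebesgue"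
        by (rule cube_pred_sets[of "\<lambda>Q. jl \<le> j0 \<and> jl \<le> j \<longrightarrow> real (card (Mset xs Q j)) \<ge> 1 / real (Suc p) * 2^(CARD('n)*j)" "int j0"])
    qed simp
  qed simp
  have Esets: "?E \<in> sets lebesgue" by (intro sets.Int s1 s2 fmeasurableD[OF lmeasurable_cball])
  have Elm0: "?E \<in> lmeasurable" by (rule fmeasurableI2[OF lmeasurable_cball _ Esets]) (rule Int_lower2)
  define E where "E = ?E"
  have Elm: "E \<in> lmeasurable" unfolding E_def by (rule Elm0)
  have Ebad: "r n \<le> N (y - xs n)" if "y \<in> E" "n \<ge> Suc K" for y n
    using that unfolding E_def by blast
  have Ehyp: "real (card (Mset xs (cube_at (int j0) y) j)) \<ge> 1 / real (Suc p) * 2^(CARD('n)*j)"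
    if "y \<in> E" "jl \<le> j0" "jl \<le> j" for y j0 j
  proof -
    have "y \<in> (\<Inter>j0. \<Inter>j. {x. jl \<le> j0 \<and> jl \<le> j \<longrightarrow> real (card (Mset xs (cube_at (int j0) x) j)) \<ge> 1 / real (Suc p) * 2^(CARD('n)*j)})"
      using that(1) unfolding E_def by (rule IntD2[OF IntD1])
    then show ?thesis using that(2,3) by blast
  qed
  have m0: "measure lebesgue E = 0"
  proof (rule ccontr)
    assume "measure lebesgue E \<noteq> 0"
    then have mpos: "measure lebesgue E > 0" using measure_nonneg[of lebesgue E] by linarith
    have Kge: "1 \<le> Suc K" by simp
    obtain j0 where j0: "j0 \<ge> jl" "\<exists>x0\<in>E. measure lebesgue (E \<inter> cube_at (int j0) x0) > (1 - c) * (1/2)^(CARD('n)*j0)"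
      using density[OF Elm mpos c, of jl] by blast
    then obtain x0 where x0: "x0 \<in> E" and dens: "measure lebesgue (E \<inter> cube_at (int j0) x0) > (1 - c) * (1/2)^(CARD('n)*j0)"
      by blast
    have hyp: "real (card (Mset xs (cube_at (int j0) x0) j)) \<ge> \<alpha> * 2 ^ (CARD('n) * j)" if "jl \<le> j" for j
      using Ehyp[OF x0 j0(1) that] unfolding \<alpha>_def .
    obtain A where A: "A \<in> lmeasurable" "A \<subseteq> cube_at (int j0) x0" "\<forall>y\<in>A. \<exists>n\<ge>Suc K. N (y - xs n) < r n"
      "measure lebesgue A \<ge> (1/2)^(CARD('n)*j0) * (\<alpha>^2/64)"
      using core[OF nrm P Kge al(1) hyp] by blast
    have dis: "(E \<inter> cube_at (int j0) x0) \<inter> A = {}"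
    proof (rule ccontr)
      assume "\<not> ?thesis"
      then obtain y where y: "y \<in> E" "y \<in> A" by blast
      then obtain n where n: "n \<ge> Suc K" "N (y - xs n) < r n" using A(3) by blast
      have "r n \<le> N (y - xs n)" by (rule Ebad[OF y(1) n(1)])
      with n(2) show False by simp
    qed
    have lm1: "E \<inter> cube_at (int j0) x0 \<in> lmeasurable" by (rule fmeasurable.Int[OF Elm cube_at_lmeasurable])
    have "measure lebesgue ((E \<inter> cube_at (int j0) x0) \<union> A) = measure lebesgue (E \<inter> cube_at (int j0) x0) + measure lebesgue A"
      using measure_Un3[OF lm1 A(1)] dis by simp
    also have "\<dots> > (1/2)^(CARD('n)*j0)"
      using dens A(4) unfolding c_def by (simp add: algebra_simps)
    finally have gt: "measure lebesgue ((E \<inter> cube_at (int j0) x0) \<union> A) > (1/2)^(CARD('n)*j0)" .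
    have "(E \<inter> cube_at (int j0) x0) \<union> A \<in> sets lebesgue" by (intro sets.Un fmeasurableD lm1 A(1))
    then have "measure lebesgue ((E \<inter> cube_at (int j0) x0) \<union> A) \<le> measure lebesgue (cube_at (int j0) x0)"
      using A(2) by (intro measure_mono_fmeasurable[OF _ _ cube_at_lmeasurable]) auto
    with gt show False by (simp add: cube_at_measure)
  qed
  have "emeasure lebesgue E = ennreal (measure lebesgue E)" by (rule emeasure_eq_measure2[OF Elm])
  then have "emeasure lebesgue E = 0" by (simp only: m0 ennreal_0)
  then have "E \<in> null_sets lebesgue" by (rule null_setsI) (simp only: E_def Esets)
  then show ?thesis unfolding E_def .
qed


theorem theorem8p3:
  fixes N :: "real^'n \<Rightarrow> real" and xs :: "nat \<Rightarrow> real^'n" and U :: "(real^'n) set"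
  assumes "is_norm N"
    and "open U" and "U \<noteq> {}"
    and "AE x in lebesgue. x \<in> U \<longrightarrow>
           (\<exists>\<alpha>>0. \<exists>jl::nat. \<forall>j0 j::nat. jl \<le> j0 \<and> jl \<le> j \<longrightarrow>
              real (card (Mset xs (cube_at (int j0) x) j)) \<ge> \<alpha> * 2 ^ (CARD('n) * j))"
  shows "uniformly_eutaxic N xs U"
  unfolding uniformly_eutaxic_def
proof (intro allI impI)
  fix r :: "nat \<Rightarrow> real"
  assume P: "P_seq CARD('n) r"
  define Bad where "Bad = (\<lambda>(K::nat, p::nat, jl::nat, R::nat).
     ({x. \<forall>n\<ge>Suc K. r n \<le> N (x - xs n)} \<inter>
          (\<Inter>j0. \<Inter>j. {x. jl \<le> j0 \<and> jl \<le> j \<longrightarrow> real (card (Mset xs (cube_at (int j0) x) j)) \<ge> 1 / real (Suc p) * 2^(CARD('n)*j)})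
          \<inter> cball 0 (real R)))"
  have null: "(\<Union>i. Bad i) \<in> null_sets lebesgue"
  proof (rule null_sets_UN)
    fix i :: "nat \<times> nat \<times> nat \<times> nat"
    obtain K p jl R where i: "i = (K, p, jl, R)" by (cases i) auto
    show "Bad i \<in> null_sets lebesgue" unfolding i Bad_def
      using E_null[OF assms(1) P, of K xs jl p R] by simp
  qed
  have "AE x in lebesgue. (x \<in> U \<longrightarrow>
           (\<exists>\<alpha>>0. \<exists>jl::nat. \<forall>j0 j::nat. jl \<le> j0 \<and> jl \<le> j \<longrightarrow>
              real (card (Mset xs (cube_at (int j0) x) j)) \<ge> \<alpha> * 2 ^ (CARD('n) * j)))
         \<longrightarrow> (x \<in> U \<longrightarrow> (\<exists>\<^sub>F n in sequentially. N (x - xs n) < r n))"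
  proof (rule AE_I'[OF null], rule subsetI)
    fix x assume "x \<in> {x \<in> space lebesgue. \<not> ((x \<in> U \<longrightarrow>
           (\<exists>\<alpha>>0. \<exists>jl::nat. \<forall>j0 j::nat. jl \<le> j0 \<and> jl \<le> j \<longrightarrow>
              real (card (Mset xs (cube_at (int j0) x) j)) \<ge> \<alpha> * 2 ^ (CARD('n) * j)))
         \<longrightarrow> (x \<in> U \<longrightarrow> (\<exists>\<^sub>F n in sequentially. N (x - xs n) < r n)))}"
    then have xU: "x \<in> U" and H: "\<exists>\<alpha>>0. \<exists>jl::nat. \<forall>j0 j::nat. jl \<le> j0 \<and> jl \<le> j \<longrightarrow>
              real (card (Mset xs (cube_at (int j0) x) j)) \<ge> \<alpha> * 2 ^ (CARD('n) * j)"
      and nf: "\<not> (\<exists>\<^sub>F n in sequentially. N (x - xs n) < r n)" by auto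
    obtain \<alpha> jl where al: "\<alpha> > 0" and Hx: "\<And>j0 j. jl \<le> j0 \<Longrightarrow> jl \<le> j \<Longrightarrow>
              real (card (Mset xs (cube_at (int j0) x) j)) \<ge> \<alpha> * 2 ^ (CARD('n) * j)" using H by blast
    have "eventually (\<lambda>n. \<not> N (x - xs n) < r n) sequentially" using nf by (simp add: not_frequently)
    then obtain K where K: "\<And>n. n \<ge> K \<Longrightarrow> r n \<le> N (x - xs n)"
      unfolding eventually_sequentially by (auto simp: not_less)
    obtain q where q: "q > 0" "inverse (real q) < \<alpha>" using ex_inverse_of_nat_less[OF al] by blast
    define p where "p = q - 1"
    have pq: "real (Suc p) = real q" using q(1) unfolding p_def by simp
    define R where "R = nat \<lceil>norm x\<rceil>"
    have xR: "x \<in> cball 0 (real R)" unfolding R_def by (simp add: dist_norm)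
    have "x \<in> Bad (K, p, jl, R)"
      unfolding Bad_def
    proof (simp only: case_prod_conv, intro IntI CollectI allI impI INT_I)
      show "x \<in> cball 0 (real R)" by (rule xR)
      fix n assume "Suc K \<le> n" then show "r n \<le> N (x - xs n)" using K by simp
    next
      fix j0 j :: nat
      assume "jl \<le> j0 \<and> jl \<le> j"
      then have "real (card (Mset xs (cube_at (int j0) x) j)) \<ge> \<alpha> * 2 ^ (CARD('n) * j)" using Hx by blast
      moreover have "1 / real (Suc p) * 2^(CARD('n)*j) \<le> \<alpha> * 2 ^ (CARD('n) * j)"
        using q pq by (intro mult_right_mono) (simp_all add: divide_inverse less_imp_le)
      ultimately show "real (card (Mset xs (cube_at (int j0) x) j)) \<ge> 1 / real (Suc p) * 2^(CARD('n)*j)" by linarith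
    qed
    then show "x \<in> (\<Union>i. Bad i)" by blast
  qed
  then show "AE x in lebesgue. x \<in> U \<longrightarrow> (\<exists>\<^sub>F n in sequentially. N (x - xs n) < r n)"
    using assms(4) by (rule AE_mp[rotated])
qed


end
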